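(* Let $n\ge2$, $1\le n_c\le n-1$, let $\rho_{\text{in}}$ be an $n$-qubit density matrix, and let $f_{\text{SC}}$ be the objective function of the $n$-qubit SC-QNN with parameter $n_c$. Then $$\mathbb{E}_{\boldsymbol\theta}\Big(f_{\text{SC}}-\frac12\Big)^2\ge\frac{\text{Tr}[(\sigma_1\otimes I^{\otimes(n-1)})\rho_{\text{in}}]^2+\text{Tr}[(\sigma_3\otimes I^{\otimes(n-1)})\rho_{\text{in}}]^2}{2^{3+n_c}},$$ where the expectation is over all parameters drawn independently and uniformly from $[0,2\pi]$.
   Context: Pauli matrices $\sigma_0=I,\sigma_1=X,\sigma_2=Y,\sigma_3=Z$; qubits numbered $1,\dots,n$. A rotation with parameter $\theta$ on qubit $q$ is $e^{-i\theta\sigma_2}$ on qubit $q$. A CNOT with control $c$ and target $t$ is $|0\rangle\langle0|_c\otimes I_t+|1\rangle\langle1|_c\otimes(\sigma_1)_t$. SC-QNN: $V_{\text{SC}}=V_nCX_{n-1}V_{n-1}\cdots CX_1V_1$, where $V_1$ applies a rotation with independent parameter to every qubit; for $2\le\ell\le n-n_c$, $V_\ell$ is a single rotation on qubit $n+1-\ell$; for $n-n_c+1\le\ell\le n$, $V_\ell$ is a single rotation on qubit $1$; for $1\le\ell\le n-1-n_c$, $CX_\ell$ is a CNOT with control $n+1-\ell$ and target $n-\ell$; for $n-n_c\le\ell\le n-1$, $CX_\ell$ is a CNOT with control $n+1-\ell$ and target $1$. $f_{\text{SC}}(\boldsymbol\theta)=\frac12+\frac12\text{Tr}[(\sigma_3\otimes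 I^{\otimes(n-1)})V_{\text{SC}}(\boldsymbol\theta)\rho_{\text{in}}V_{\text{SC}}(\boldsymbol\theta)^\dagger]$. *)

theory Defs
  imports "HOL-Probability.Probability" "Jordan_Normal_Form.Matrix"
begin

text \<open>n-qubit operators are 2^n x 2^n complex matrices. Basis index i < 2^n;
  qubit q (1 \<le> q \<le> n) corresponds to bit (n - q) of i, so qubit 1 is the
  leftmost tensor factor.\<close>

definition qbit :: "nat \<Rightarrow> nat \<Rightarrow> nat \<Rightarrow> bool" where
  "qbit n q i = odd (i div 2 ^ (n - q))"

definition qclr :: "nat \<Rightarrow> nat \<Rightarrow> nat \<Rightarrow> nat" where
  "qclr n q i = (if qbit n q i then i - 2 ^ (n - q) else i)"

definition qflip :: "nat \<Rightarrow> nat \<Rightarrow> nat \<Rightarrow> nat" where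
  "qflip n q i = (if qbit n q i then i - 2 ^ (n - q) else i + 2 ^ (n - q))"

definition on_qubit :: "nat \<Rightarrow> nat \<Rightarrow> complex mat \<Rightarrow> complex mat" where
  "on_qubit n q U = mat (2 ^ n) (2 ^ n)
     (\<lambda>(i, j). if qclr n q i = qclr n q j
               then U $$ (of_bool (qbit n q i), of_bool (qbit n q j)) else 0)"

definition sigma1 :: "complex mat" where
  "sigma1 = mat 2 2 (\<lambda>(i, j). if i \<noteq> j then 1 else 0)"
definition sigma2 :: "complex mat" where
  "sigma2 = mat 2 2 (\<lambda>(i, j). if i = 0 \<and> j = 1 then - \<i> else if i = 1 \<and> j = 0 then \<i> else 0)"
definition sigma3 :: "complex mat" where
  "sigma3 = mat 2 2 (\<lambda>(i, j). if i = j then (if i = 0 then 1 else -1) else 0)"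

text \<open>The rotation e^{-i theta sigma_2} = cos theta I - i sin theta sigma_2
  (since sigma_2^2 = I), written out explicitly.\<close>
definition rotY :: "real \<Rightarrow> complex mat" where
  "rotY \<theta> = complex_of_real (cos \<theta>) \<cdot>\<^sub>m one_mat 2 + (- \<i> * complex_of_real (sin \<theta>)) \<cdot>\<^sub>m sigma2"

definition cnot :: "nat \<Rightarrow> nat \<Rightarrow> nat \<Rightarrow> complex mat" where
  "cnot n c t = mat (2 ^ n) (2 ^ n)
     (\<lambda>(i, j). if qbit n c j then (if i = qflip n t j then 1 else 0)
               else (if i = j then 1 else 0))"

definition mtrace :: "complex mat \<Rightarrow> complex" where
  "mtrace A = (\<Sum>i < dim_row A. A $$ (i, i))"

definition adj :: "complex mat \<Rightarrow> complex mat" where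
  "adj A = mat (dim_col A) (dim_row A) (\<lambda>(i, j). cnj (A $$ (j, i)))"

text \<open>Parameters: theta (q - 1) is the parameter of the rotation on qubit q in V_1
  (q = 1..n); theta (n + l - 2) is the parameter of V_l for l = 2..n.
  In total 2n - 1 parameters, indices 0..2n-2.\<close>

definition V1 :: "nat \<Rightarrow> (nat \<Rightarrow> real) \<Rightarrow> complex mat" where
  "V1 n \<theta> = foldr (\<lambda>q M. on_qubit n q (rotY (\<theta> (q - 1))) * M) [1..<n+1] (one_mat (2 ^ n))"

definition Vl :: "nat \<Rightarrow> nat \<Rightarrow> (nat \<Rightarrow> real) \<Rightarrow> nat \<Rightarrow> complex mat" where
  "Vl n nc \<theta> l = (if l = 1 then V1 n \<theta>
     else on_qubit n (if l \<le> n - nc then n + 1 - l else 1) (rotY (\<theta> (n + l - 2))))"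

definition CX :: "nat \<Rightarrow> nat \<Rightarrow> nat \<Rightarrow> complex mat" where
  "CX n nc l = cnot n (n + 1 - l) (if l \<le> n - 1 - nc then n - l else 1)"

fun SC_partial :: "nat \<Rightarrow> nat \<Rightarrow> (nat \<Rightarrow> real) \<Rightarrow> nat \<Rightarrow> complex mat" where
  "SC_partial n nc \<theta> 0 = Vl n nc \<theta> 1"
| "SC_partial n nc \<theta> (Suc k) = Vl n nc \<theta> (k + 2) * CX n nc (k + 1) * SC_partial n nc \<theta> k"

definition V_SC :: "nat \<Rightarrow> nat \<Rightarrow> (nat \<Rightarrow> real) \<Rightarrow> complex mat" where
  "V_SC n nc \<theta> = SC_partial n nc \<theta> (n - 1)"

text \<open>f_SC; the trace is real for Hermitian rho, we take its real part.\<close>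
definition f_SC :: "nat \<Rightarrow> nat \<Rightarrow> complex mat \<Rightarrow> (nat \<Rightarrow> real) \<Rightarrow> real" where
  "f_SC n nc \<rho> \<theta> = 1/2 + 1/2 * Re (mtrace (on_qubit n 1 sigma3 * V_SC n nc \<theta> * \<rho> * adj (V_SC n nc \<theta>)))"

definition density_matrix :: "nat \<Rightarrow> complex mat \<Rightarrow> bool" where
  "density_matrix n \<rho> \<longleftrightarrow> \<rho> \<in> carrier_mat (2 ^ n) (2 ^ n)
     \<and> (\<forall>i < 2 ^ n. \<forall>j < 2 ^ n. \<rho> $$ (i, j) = cnj (\<rho> $$ (j, i)))
     \<and> (\<forall>v :: nat \<Rightarrow> complex. 0 \<le> Re (\<Sum>i < 2 ^ n. \<Sum>j < 2 ^ n. cnj (v i) * \<rho> $$ (i, j) * v j))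
     \<and> mtrace \<rho> = 1"

definition param_measure :: "nat \<Rightarrow> (nat \<Rightarrow> real) measure" where
  "param_measure n = PiM {..< 2 * n - 1} (\<lambda>_. uniform_measure lborel {0 .. 2 * pi})"

end

theory Submission
  imports Defs
begin

lemma nat_lt_pow2_iff: "(i::nat) < 2 ^ n \<longleftrightarrow> (\<forall>k. bit i k \<longrightarrow> k < n)"
proof -
  have "i < 2 ^ n \<longleftrightarrow> take_bit n i = i" by (simp add: take_bit_nat_eq_self_iff)
  also have "\<dots> \<longleftrightarrow> (\<forall>k. bit i k \<longrightarrow> k < n)"
    by (auto simp: bit_eq_iff bit_take_bit_iff)
  finally show ?thesis .
qed

lemma set_bit_lt: "(i::nat) < 2 ^ n \<Longrightarrow> m < n \<Longrightarrow> set_bit m i < 2 ^ n"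
  by (auto simp: nat_lt_pow2_iff bit_set_bit_iff)
lemma unset_bit_lt: "(i::nat) < 2 ^ n \<Longrightarrow> unset_bit m i < 2 ^ n"
  by (auto simp: nat_lt_pow2_iff bit_unset_bit_iff)
lemma flip_bit_lt: "(i::nat) < 2 ^ n \<Longrightarrow> m < n \<Longrightarrow> flip_bit m i < 2 ^ n"
  by (auto simp: nat_lt_pow2_iff bit_flip_bit_iff)

lemma bit_eq_split:
  fixes x y :: nat
  assumes "\<And>b. b \<noteq> m \<Longrightarrow> bit x b = bit y b" "bit x m = bit y m"
  shows "x = y"
  by (rule bit_eqI) (metis assms)

lemma unset_bit_nat_eq: "unset_bit m (i::nat) = (if bit i m then i - 2 ^ m else i)"
proof (cases "bit i m")
  case True
  have "set_bit m (unset_bit m i) = i" using True by (intro bit_eq_split[of m]) (auto simp: bit_simps)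
  moreover have "set_bit m (unset_bit m i) = unset_bit m i + 2 ^ m"
    by (simp add: set_bit_eq bit_simps)
  ultimately show ?thesis using True by simp
next
  case False
  have "unset_bit m i = i" by (rule bit_eqI) (use False in \<open>auto simp: bit_unset_bit_iff\<close>)
  then show ?thesis using False by simp
qed

lemma qbit_eq: "qbit n q i = bit i (n - q)"
  by (simp add: qbit_def bit_iff_odd)
lemma qclr_eq: "qclr n q i = unset_bit (n - q) i"
  by (simp add: qclr_def qbit_eq unset_bit_nat_eq)
lemma qflip_eq: "qflip n q i = flip_bit (n - q) i"
proof -
  have "flip_bit (n-q) i = (if bit i (n-q) then unset_bit (n-q) i else set_bit (n-q) i)"
    by (simp add: flip_bit_eq_if)
  then show ?thesis by (simp add: qflip_def qbit_eq unset_bit_nat_eq set_bit_eq)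
qed

definition oq :: "nat \<Rightarrow> nat \<Rightarrow> complex mat \<Rightarrow> complex mat" where
  "oq n m U = mat (2 ^ n) (2 ^ n)
     (\<lambda>(i, j). if unset_bit m i = unset_bit m j
               then U $$ (of_bool (bit i m), of_bool (bit j m)) else 0)"

lemma on_qubit_oq: "on_qubit n q U = oq n (n - q) U"
  unfolding on_qubit_def oq_def qclr_eq qbit_eq ..

lemma oq_carrier[simp]: "oq n m U \<in> carrier_mat (2^n) (2^n)"
  and oq_dim[simp]: "dim_row (oq n m U) = 2^n" "dim_col (oq n m U) = 2^n"
  by (auto simp: oq_def)

lemma oq_index: "i < 2^n \<Longrightarrow> j < 2^n \<Longrightarrow> oq n m U $$ (i,j) =
   (if unset_bit m i = unset_bit m j then U $$ (of_bool (bit i m), of_bool (bit j m)) else 0)"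
  by (simp add: oq_def)

lemma sum_pair_bit:
  fixes h :: "nat \<Rightarrow> 'a::comm_monoid_add"
  assumes i: "i < 2^n" and m: "m < n"
  shows "(\<Sum>k<2^n. if unset_bit m i = unset_bit m k then h k else 0)
       = h (unset_bit m i) + h (set_bit m i)"
proof -
  have S: "{k. k < 2^n \<and> unset_bit m i = unset_bit m k} = {unset_bit m i, set_bit m i}"
  proof (intro equalityI subsetI)
    fix k assume "k \<in> {k. k < (2::nat)^n \<and> unset_bit m i = unset_bit m k}"
    then have k: "unset_bit m i = unset_bit m k" by simp
    have agree: "\<And>b. b \<noteq> m \<Longrightarrow> bit k b = bit i b"
      by (metis k bit_unset_bit_iff)
    show "k \<in> {unset_bit m i, set_bit m i}"
    proof (cases "bit k m")
      case True
      have "k = set_bit m i" by (rule bit_eq_split[of m]) (use agree True in \<open>auto simp: bit_set_bit_iff\<close>)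
      then show ?thesis by simp
    next
      case False
      have "k = unset_bit m i" by (rule bit_eq_split[of m]) (use agree False in \<open>auto simp: bit_unset_bit_iff\<close>)
      then show ?thesis by simp
    qed
  next
    fix k assume "k \<in> {unset_bit m i, set_bit m i}"
    moreover have "unset_bit m i < 2^n" using i by (rule unset_bit_lt)
    moreover have "set_bit m i < 2^n" using i m by (rule set_bit_lt)
    moreover have "unset_bit m (unset_bit m i) = unset_bit m i"
      by (rule bit_eqI) (auto simp: bit_unset_bit_iff)
    moreover have "unset_bit m (set_bit m i) = unset_bit m i"
      by (rule bit_eqI) (auto simp: bit_unset_bit_iff bit_set_bit_iff)
    ultimately show "k \<in> {k. k < (2::nat)^n \<and> unset_bit m i = unset_bit m k}" by auto
  qed
  have ne: "unset_bit m i \<noteq> set_bit m (i::nat)"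
  proof
    assume "unset_bit m i = set_bit m i"
    then have "bit (unset_bit m i) m = bit (set_bit m i) m" by simp
    then show False by (simp add: bit_simps)
  qed
  have "(\<Sum>k<2^n. if unset_bit m i = unset_bit m k then h k else 0)
      = (\<Sum>k\<in>{k \<in> {..<2^n}. unset_bit m i = unset_bit m k}. h k)"
    by (rule sum.inter_filter[symmetric]) simp
  also have "\<dots> = (\<Sum>k\<in>{k. k < 2^n \<and> unset_bit m i = unset_bit m k}. h k)"
    by (rule arg_cong[where f="sum h"]) auto
  also have "\<dots> = h (unset_bit m i) + h (set_bit m i)" using S ne by simp
  finally show ?thesis .
qed


lemma mult_entry:
  fixes A B :: "'a::comm_semiring_0 mat"
  assumes "A \<in> carrier_mat r N" "B \<in> carrier_mat N c" "i < r" "j < c"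
  shows "(A * B) $$ (i,j) = (\<Sum>k<N. A $$ (i,k) * B $$ (k,j))"
  using assms by (auto simp: scalar_prod_def lessThan_atLeast0 intro!: sum.cong)

lemma unset_eq_iff: "unset_bit a (x::nat) = unset_bit a y \<longleftrightarrow> (\<forall>b. b \<noteq> a \<longrightarrow> bit x b = bit y b)"
proof
  assume "unset_bit a x = unset_bit a y"
  then show "\<forall>b. b \<noteq> a \<longrightarrow> bit x b = bit y b" by (metis bit_unset_bit_iff)
next
  assume H: "\<forall>b. b \<noteq> a \<longrightarrow> bit x b = bit y b"
  show "unset_bit a x = unset_bit a y"
    by (rule bit_eq_split[of a]) (use H in \<open>auto simp: bit_unset_bit_iff\<close>)
qed

lemma unset_unset[simp]: "unset_bit m (unset_bit m (i::nat)) = unset_bit m i"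
  by (rule bit_eqI) (auto simp: bit_unset_bit_iff)
lemma unset_set[simp]: "unset_bit m (set_bit m (i::nat)) = unset_bit m i"
  by (rule bit_eqI) (auto simp: bit_unset_bit_iff bit_set_bit_iff)
lemma bit_unset_same[simp]: "\<not> bit (unset_bit m (i::nat)) m"
  by (simp add: bit_unset_bit_iff)
lemma bit_set_same[simp]: "bit (set_bit m (i::nat)) m"
  by (simp add: bit_set_bit_iff)
lemma bit_unset_other: "b \<noteq> m \<Longrightarrow> bit (unset_bit m (i::nat)) b = bit i b"
  by (simp add: bit_unset_bit_iff)
lemma bit_set_other: "b \<noteq> m \<Longrightarrow> bit (set_bit m (i::nat)) b = bit i b"
  by (simp add: bit_set_bit_iff)

lemma mat2_mult_entry:
  fixes U V :: "complex mat"
  assumes "U \<in> carrier_mat 2 2" "V \<in> carrier_mat 2 2" "a < 2" "b < 2"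
  shows "(U * V) $$ (a,b) = U $$ (a,0) * V $$ (0,b) + U $$ (a,1) * V $$ (1,b)"
  using mult_entry[OF assms] by (simp add: numeral_2_eq_2 lessThan_Suc)

lemma oq_mult_same:
  assumes U: "U \<in> carrier_mat 2 2" and V: "V \<in> carrier_mat 2 2" and m: "m < n"
  shows "oq n m U * oq n m V = oq n m (U * V)"
proof (rule eq_matI)
  fix i j assume i: "i < dim_row (oq n m (U * V))" and j: "j < dim_col (oq n m (U * V))"
  then have i: "i < 2^n" and j: "j < 2^n" by auto
  have "(oq n m U * oq n m V) $$ (i,j) = (\<Sum>k<2^n. oq n m U $$ (i,k) * oq n m V $$ (k,j))"
    by (rule mult_entry) (use i j in auto)
  also have "\<dots> = (\<Sum>k<2^n. if unset_bit m i = unset_bit m k then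
        U $$ (of_bool (bit i m), of_bool (bit k m)) * oq n m V $$ (k,j) else 0)"
    by (rule sum.cong) (auto simp: oq_index i)
  also have "\<dots> = U $$ (of_bool (bit i m), 0) * oq n m V $$ (unset_bit m i, j)
      + U $$ (of_bool (bit i m), 1) * oq n m V $$ (set_bit m i, j)"
    by (subst sum_pair_bit[OF i m]) simp
  also have "\<dots> = oq n m (U * V) $$ (i,j)"
    using unset_bit_lt[OF i] set_bit_lt[OF i m] i j
    by (simp add: oq_index mat2_mult_entry[OF U V])
  finally show "(oq n m U * oq n m V) $$ (i,j) = oq n m (U * V) $$ (i,j)" .
qed auto


lemma oq_mult_diff_entry:
  assumes m: "m < n" and m': "m' < n" and mm: "m \<noteq> m'" and i: "i < 2^n" and j: "j < 2^n"
  shows "(oq n m U * oq n m' V) $$ (i,j) =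
    (if (\<forall>b. b \<noteq> m \<and> b \<noteq> m' \<longrightarrow> bit i b = bit j b)
     then U $$ (of_bool (bit i m), of_bool (bit j m)) * V $$ (of_bool (bit i m'), of_bool (bit j m')) else 0)"
proof -
  have "(oq n m U * oq n m' V) $$ (i,j) = (\<Sum>k<2^n. oq n m U $$ (i,k) * oq n m' V $$ (k,j))"
    by (rule mult_entry) (use i j in auto)
  also have "\<dots> = (\<Sum>k<2^n. if unset_bit m i = unset_bit m k then
        U $$ (of_bool (bit i m), of_bool (bit k m)) * oq n m' V $$ (k,j) else 0)"
    by (rule sum.cong) (auto simp: oq_index i)
  also have "\<dots> = U $$ (of_bool (bit i m), 0) * oq n m' V $$ (unset_bit m i, j)
      + U $$ (of_bool (bit i m), 1) * oq n m' V $$ (set_bit m i, j)"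
    by (subst sum_pair_bit[OF i m]) simp
  also have "\<dots> = U $$ (of_bool (bit i m), 0) * (if unset_bit m' (unset_bit m i) = unset_bit m' j
         then V $$ (of_bool (bit i m'), of_bool (bit j m')) else 0)
      + U $$ (of_bool (bit i m), 1) * (if unset_bit m' (set_bit m i) = unset_bit m' j
         then V $$ (of_bool (bit i m'), of_bool (bit j m')) else 0)"
    using unset_bit_lt[OF i] set_bit_lt[OF i m] i j mm
    by (simp add: oq_index bit_unset_other bit_set_other)
  also have "\<dots> = (if (\<forall>b. b \<noteq> m \<and> b \<noteq> m' \<longrightarrow> bit i b = bit j b)
     then U $$ (of_bool (bit i m), of_bool (bit j m)) * V $$ (of_bool (bit i m'), of_bool (bit j m')) else 0)"
  proof -
    have e1: "unset_bit m' (unset_bit m i) = unset_bit m' j \<longleftrightarrow>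
       (\<forall>b. b \<noteq> m \<and> b \<noteq> m' \<longrightarrow> bit i b = bit j b) \<and> \<not> bit j m"
      unfolding unset_eq_iff using mm by (auto simp: bit_unset_bit_iff)
    have e2: "unset_bit m' (set_bit m i) = unset_bit m' j \<longleftrightarrow>
       (\<forall>b. b \<noteq> m \<and> b \<noteq> m' \<longrightarrow> bit i b = bit j b) \<and> bit j m"
      unfolding unset_eq_iff using mm by (auto simp: bit_set_bit_iff)
    show ?thesis unfolding e1 e2 by auto
  qed
  finally show ?thesis .
qed

lemma oq_comm:
  assumes m: "m < n" and m': "m' < n" and mm: "m \<noteq> m'"
  shows "oq n m U * oq n m' V = oq n m' V * oq n m U"
proof (rule eq_matI)
  fix i j assume "i < dim_row (oq n m' V * oq n m U)" "j < dim_col (oq n m' V * oq n m U)"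
  then have i: "i < 2^n" and j: "j < 2^n" by auto
  show "(oq n m U * oq n m' V) $$ (i,j) = (oq n m' V * oq n m U) $$ (i,j)"
    unfolding oq_mult_diff_entry[OF m m' mm i j] oq_mult_diff_entry[OF m' m mm[symmetric] i j]
    by (auto simp: mult.commute)
qed auto

lemma adj_carrier[simp]: "adj A \<in> carrier_mat (dim_col A) (dim_row A)"
  and adj_dim[simp]: "dim_row (adj A) = dim_col A" "dim_col (adj A) = dim_row A"
  by (auto simp: adj_def)
lemma adj_index[simp]: "i < dim_col A \<Longrightarrow> j < dim_row A \<Longrightarrow> adj A $$ (i,j) = cnj (A $$ (j,i))"
  by (simp add: adj_def)

lemma oq_adj:
  assumes U: "U \<in> carrier_mat 2 2"
  shows "adj (oq n m U) = oq n m (adj U)"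
proof (rule eq_matI)
  fix i j assume "i < dim_row (oq n m (adj U))" "j < dim_col (oq n m (adj U))"
  then have i: "i < 2^n" and j: "j < 2^n" by auto
  show "adj (oq n m U) $$ (i,j) = oq n m (adj U) $$ (i,j)"
    using i j U by (auto simp: oq_index)
qed auto

lemma oq_lin:
  assumes U: "U \<in> carrier_mat 2 2" and V: "V \<in> carrier_mat 2 2"
  shows "oq n m (a \<cdot>\<^sub>m U + b \<cdot>\<^sub>m V) = a \<cdot>\<^sub>m oq n m U + b \<cdot>\<^sub>m oq n m V"
proof (rule eq_matI)
  fix i j assume "i < dim_row (a \<cdot>\<^sub>m oq n m U + b \<cdot>\<^sub>m oq n m V)" "j < dim_col (a \<cdot>\<^sub>m oq n m U + b \<cdot>\<^sub>m oq n m V)"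
  then have i: "i < 2^n" and j: "j < 2^n" by auto
  show "oq n m (a \<cdot>\<^sub>m U + b \<cdot>\<^sub>m V) $$ (i,j) = (a \<cdot>\<^sub>m oq n m U + b \<cdot>\<^sub>m oq n m V) $$ (i,j)"
    using i j U V by (auto simp: oq_index)
qed auto

lemma oq_one:
  shows "oq n m (1\<^sub>m 2) = 1\<^sub>m (2^n)"
proof (rule eq_matI)
  fix i j assume "i < dim_row (1\<^sub>m (2^n) :: complex mat)" "j < dim_col (1\<^sub>m (2^n) :: complex mat)"
  then have i: "i < 2^n" and j: "j < 2^n" by auto
  have "unset_bit m i = unset_bit m j \<and> bit i m = bit j m \<longleftrightarrow> i = j"
    by (auto simp: unset_eq_iff intro: bit_eq_split[of m])
  then show "oq n m (1\<^sub>m 2) $$ (i,j) = 1\<^sub>m (2^n) $$ (i,j)"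
    using i j by (auto simp: oq_index of_bool_def split: if_splits)
qed auto


definition pm :: "nat \<Rightarrow> (nat \<Rightarrow> nat) \<Rightarrow> complex mat" where
  "pm n \<pi> = mat (2 ^ n) (2 ^ n) (\<lambda>(i, j). if i = \<pi> j then 1 else 0)"

lemma pm_carrier[simp]: "pm n \<pi> \<in> carrier_mat (2^n) (2^n)"
  and pm_dim[simp]: "dim_row (pm n \<pi>) = 2^n" "dim_col (pm n \<pi>) = 2^n"
  by (auto simp: pm_def)
lemma pm_index: "i < 2^n \<Longrightarrow> j < 2^n \<Longrightarrow> pm n \<pi> $$ (i,j) = (if i = \<pi> j then 1 else 0)"
  by (simp add: pm_def)

lemma mult_pm_right:
  assumes A: "A \<in> carrier_mat (2^n) (2^n)" and i: "i < 2^n" and j: "j < 2^n" and pj: "\<pi> j < 2^n"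
  shows "(A * pm n \<pi>) $$ (i,j) = A $$ (i, \<pi> j)"
proof -
  have "(A * pm n \<pi>) $$ (i,j) = (\<Sum>k<2^n. A $$ (i,k) * pm n \<pi> $$ (k,j))"
    by (rule mult_entry[OF A]) (use i j in auto)
  also have "\<dots> = (\<Sum>k<2^n. if k = \<pi> j then A $$ (i,k) else 0)"
    by (rule sum.cong) (auto simp: pm_index j)
  also have "\<dots> = A $$ (i, \<pi> j)" using pj by simp
  finally show ?thesis .
qed

lemma mult_pm_left:
  assumes A: "A \<in> carrier_mat (2^n) (2^n)" and i: "i < 2^n" and j: "j < 2^n" and pi: "\<pi> i < 2^n"
    and inv: "\<And>k. k < 2^n \<Longrightarrow> i = \<pi> k \<longleftrightarrow> k = \<pi> i"
  shows "(pm n \<pi> * A) $$ (i,j) = A $$ (\<pi> i, j)"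
proof -
  have "(pm n \<pi> * A) $$ (i,j) = (\<Sum>k<2^n. pm n \<pi> $$ (i,k) * A $$ (k,j))"
    by (rule mult_entry[OF _ A]) (use i j in auto)
  also have "\<dots> = (\<Sum>k<2^n. if k = \<pi> i then A $$ (k,j) else 0)"
    by (rule sum.cong) (auto simp: pm_index i inv)
  also have "\<dots> = A $$ (\<pi> i, j)" using pi by simp
  finally show ?thesis .
qed

definition invol :: "nat \<Rightarrow> (nat \<Rightarrow> nat) \<Rightarrow> bool" where
  "invol n \<pi> \<longleftrightarrow> (\<forall>j < 2^n. \<pi> j < 2^n \<and> \<pi> (\<pi> j) = j)"

lemma invol_iff: "invol n \<pi> \<Longrightarrow> i < 2^n \<Longrightarrow> k < 2^n \<Longrightarrow> i = \<pi> k \<longleftrightarrow> k = \<pi> i"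
  unfolding invol_def by metis

lemma pm_adj: assumes "invol n \<pi>" shows "adj (pm n \<pi>) = pm n \<pi>"
proof (rule eq_matI)
  fix i j assume "i < dim_row (pm n \<pi>)" "j < dim_col (pm n \<pi>)"
  then have i: "i < 2^n" and j: "j < 2^n" by auto
  show "adj (pm n \<pi>) $$ (i,j) = pm n \<pi> $$ (i,j)"
    using i j invol_iff[OF assms i j] by (auto simp: pm_index)
qed auto

lemma pm_mult_pm:
  assumes "\<And>j. j < 2^n \<Longrightarrow> \<sigma> j < 2^n"
  shows "pm n \<pi> * pm n \<sigma> = pm n (\<pi> \<circ> \<sigma>)"
proof (rule eq_matI)
  fix i j assume "i < dim_row (pm n (\<pi> \<circ> \<sigma>))" "j < dim_col (pm n (\<pi> \<circ> \<sigma>))"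
  then have i: "i < 2^n" and j: "j < 2^n" by auto
  show "(pm n \<pi> * pm n \<sigma>) $$ (i,j) = pm n (\<pi> \<circ> \<sigma>) $$ (i,j)"
    using mult_pm_right[of "pm n \<pi>" n i j \<sigma>, OF pm_carrier i j assms[OF j]] i j assms[OF j] by (simp add: pm_index)
qed auto

lemma pm_id: "pm n id = 1\<^sub>m (2^n)"
  by (rule eq_matI) (auto simp: pm_index)

lemma pm_unitary: assumes "invol n \<pi>" shows "adj (pm n \<pi>) * pm n \<pi> = 1\<^sub>m (2^n)"
proof -
  have "pm n \<pi> * pm n \<pi> = pm n (\<pi> \<circ> \<pi>)"
    by (rule pm_mult_pm) (use assms in \<open>auto simp: invol_def\<close>)
  also have "pm n (\<pi> \<circ> \<pi>) = pm n id"
    by (rule eq_matI) (use assms in \<open>auto simp: pm_index invol_def\<close>)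
  finally show ?thesis using pm_adj[OF assms] pm_id by simp
qed

lemma pm_oq_comm:
  assumes inv: "invol n \<pi>"
    and pb: "\<And>j. j < 2^n \<Longrightarrow> bit (\<pi> j) m = bit j m"
    and pu: "\<And>j. j < 2^n \<Longrightarrow> unset_bit m (\<pi> j) = \<pi> (unset_bit m j)"
  shows "oq n m U * pm n \<pi> = pm n \<pi> * oq n m U"
proof (rule eq_matI)
  fix i j assume "i < dim_row (pm n \<pi> * oq n m U)" "j < dim_col (pm n \<pi> * oq n m U)"
  then have i: "i < 2^n" and j: "j < 2^n" by auto
  have pi: "\<pi> i < 2^n" and pj: "\<pi> j < 2^n" using inv i j by (auto simp: invol_def)
  have ui: "unset_bit m i < 2^n" and uj: "unset_bit m j < 2^n" using i j by (auto intro: unset_bit_lt)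
  have "unset_bit m i = unset_bit m (\<pi> j) \<longleftrightarrow> unset_bit m (\<pi> i) = unset_bit m j"
    unfolding pu[OF i] pu[OF j] using invol_iff[OF inv ui] invol_iff[OF inv _ uj]
      inv ui uj unfolding invol_def by metis
  moreover have L: "(oq n m U * pm n \<pi>) $$ (i,j) = oq n m U $$ (i, \<pi> j)"
    by (rule mult_pm_right) (auto simp: i j pj)
  moreover have R: "(pm n \<pi> * oq n m U) $$ (i,j) = oq n m U $$ (\<pi> i, j)"
    by (rule mult_pm_left) (use i j pi invol_iff[OF inv i] in auto)
  ultimately show "(oq n m U * pm n \<pi>) $$ (i,j) = (pm n \<pi> * oq n m U) $$ (i,j)"
    using i j pi pj pb[OF i] pb[OF j] by (simp add: oq_index)
qed auto

lemma oq_sigma1: "oq n m sigma1 = pm n (flip_bit m)"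
proof (rule eq_matI)
  fix i j assume "i < dim_row (pm n (flip_bit m))" "j < dim_col (pm n (flip_bit m))"
  then have i: "i < 2^n" and j: "j < 2^n" by auto
  have "(unset_bit m i = unset_bit m j \<and> bit i m \<noteq> bit j m) \<longleftrightarrow> i = flip_bit m j"
  proof
    assume "unset_bit m i = unset_bit m j \<and> bit i m \<noteq> bit j m"
    then show "i = flip_bit m j"
      by (intro bit_eq_split[of m]) (auto simp: unset_eq_iff bit_flip_bit_iff)
  next
    assume "i = flip_bit m j"
    then show "unset_bit m i = unset_bit m j \<and> bit i m \<noteq> bit j m"
      by (auto simp: unset_eq_iff bit_flip_bit_iff)
  qed
  then show "oq n m sigma1 $$ (i,j) = pm n (flip_bit m) $$ (i,j)"
    using i j by (auto simp: oq_index pm_index sigma1_def of_bool_def split: if_splits)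
qed auto


definition cpi :: "nat \<Rightarrow> nat \<Rightarrow> nat \<Rightarrow> nat" where
  "cpi mc mt j = (if bit j mc then flip_bit mt j else j)"

lemma cnot_pm: "cnot n c t = pm n (cpi (n - c) (n - t))"
  unfolding cnot_def pm_def cpi_def qbit_eq qflip_eq
  by (rule cong[OF refl]) (auto simp: fun_eq_iff)

lemma flip_flip[simp]: "flip_bit m (flip_bit m (j::nat)) = j"
  by (rule bit_eqI) (auto simp: bit_flip_bit_iff)

lemma cpi_invol: assumes "mc \<noteq> mt" "mt < n" shows "invol n (cpi mc mt)"
  unfolding invol_def cpi_def using assms
  by (auto simp: flip_bit_lt bit_flip_bit_iff)

lemma mtrace_comm:
  assumes A: "A \<in> carrier_mat r c" and B: "B \<in> carrier_mat c r"
  shows "mtrace (A * B) = mtrace (B * A)"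
proof -
  have "mtrace (A * B) = (\<Sum>i<r. (A * B) $$ (i,i))" using A by (simp add: mtrace_def)
  also have "\<dots> = (\<Sum>i<r. \<Sum>k<c. A $$ (i,k) * B $$ (k,i))"
    by (rule sum.cong[OF refl], rule mult_entry[OF A B]) auto
  also have "\<dots> = (\<Sum>k<c. \<Sum>i<r. B $$ (k,i) * A $$ (i,k))"
    by (subst sum.swap) (simp add: mult.commute)
  also have "\<dots> = (\<Sum>k<c. (B * A) $$ (k,k))"
    by (rule sum.cong[OF refl], rule mult_entry[OF B A, symmetric]) auto
  also have "\<dots> = mtrace (B * A)" using B by (simp add: mtrace_def)
  finally show ?thesis .
qed

lemma mtrace_add: "A \<in> carrier_mat r r \<Longrightarrow> B \<in> carrier_mat r r \<Longrightarrow> mtrace (A + B) = mtrace A + mtrace B"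
  unfolding mtrace_def by (auto simp: sum.distrib)
lemma mtrace_smult: "A \<in> carrier_mat r r \<Longrightarrow> mtrace (a \<cdot>\<^sub>m A) = a * mtrace A"
  unfolding mtrace_def by (auto simp: sum_distrib_left)

lemma adj_mult:
  assumes A: "A \<in> carrier_mat r k" and B: "B \<in> carrier_mat k c"
  shows "adj (A * B) = adj B * adj A"
proof (rule eq_matI)
  fix i j assume "i < dim_row (adj B * adj A)" "j < dim_col (adj B * adj A)"
  then have i: "i < c" and j: "j < r" using A B by auto
  have "adj (A * B) $$ (i,j) = cnj (\<Sum>l<k. A $$ (j,l) * B $$ (l,i))"
    using A B i j by (simp add: mult_entry[OF A B j i])
  also have "\<dots> = (\<Sum>l<k. adj B $$ (i,l) * adj A $$ (l,j))"
    using A B i j by (auto simp: mult.commute intro!: sum.cong)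
  also have "\<dots> = (adj B * adj A) $$ (i,j)"
    by (rule mult_entry[symmetric]) (use A B i j in auto)
  finally show "adj (A * B) $$ (i,j) = (adj B * adj A) $$ (i,j)" .
qed (use A B in auto)

lemma sq_mult: "A \<in> carrier_mat N N \<Longrightarrow> B \<in> carrier_mat N N \<Longrightarrow> A * B \<in> carrier_mat N N"
  by (rule mult_carrier_mat)

lemma adj_sq[simp]: "A \<in> carrier_mat N N \<Longrightarrow> adj A \<in> carrier_mat N N"
  using adj_carrier[of A] by auto

lemma conj_trace:
  assumes P: "P \<in> carrier_mat N N" and G: "G \<in> carrier_mat N N" and M: "M \<in> carrier_mat N N"
    and R: "R \<in> carrier_mat N N"
  shows "mtrace (P * (G * M) * R * adj (G * M)) = mtrace ((adj G * P * G) * M * R * adj M)"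
proof -
  have aG: "adj G \<in> carrier_mat N N" and aM: "adj M \<in> carrier_mat N N" using G M by auto
  define X where "X = P * G * (M * R * adj M)"
  have X: "X \<in> carrier_mat N N" unfolding X_def using P G M R aM by (simp add: sq_mult)
  have "P * (G * M) * R * adj (G * M) = X * adj G"
    unfolding X_def using P G M R aG aM by (simp add: adj_mult[OF G M] assoc_mult_mat[of _ N N _ N _ N] sq_mult)
  then have "mtrace (P * (G * M) * R * adj (G * M)) = mtrace (adj G * X)"
    using mtrace_comm[OF X aG] by simp
  also have "adj G * X = (adj G * P * G) * M * R * adj M"
    unfolding X_def using P G M R aG aM by (simp add: assoc_mult_mat[of _ N N _ N _ N] sq_mult)
  finally show ?thesis .
qed

lemma conj_commute:
  assumes P: "P \<in> carrier_mat N N" and G: "G \<in> carrier_mat N N"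
    and u: "adj G * G = 1\<^sub>m N" and c: "G * P = P * G"
  shows "adj G * P * G = P"
proof -
  have aG: "adj G \<in> carrier_mat N N" using G by auto
  have "adj G * P * G = adj G * (G * P)" using P G aG c by (simp add: assoc_mult_mat[of _ N N _ N _ N] sq_mult)
  also have "\<dots> = (adj G * G) * P" using P G aG by (simp add: assoc_mult_mat[of _ N N _ N _ N] sq_mult)
  finally show ?thesis using u P by simp
qed


lemma rotY_carrier[simp]: "rotY t \<in> carrier_mat 2 2"
  by (simp add: rotY_def sigma2_def)
lemma sigma_carrier[simp]: "sigma1 \<in> carrier_mat 2 2" "sigma2 \<in> carrier_mat 2 2" "sigma3 \<in> carrier_mat 2 2"
  by (auto simp: sigma1_def sigma2_def sigma3_def)

lemma rotY_dim[simp]: "dim_row (rotY t) = 2" "dim_col (rotY t) = 2"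
  using carrier_matD[OF rotY_carrier[of t]] by auto

lemma ii_mult: "\<i> * x * \<i> = - (x::complex)"
  by (simp add: complex_eq_iff)

lemma rotY_idx:
  "rotY t $$ (0,0) = complex_of_real (cos t)" "rotY t $$ (0,1) = - complex_of_real (sin t)"
  "rotY t $$ (1,0) = complex_of_real (sin t)" "rotY t $$ (1,1) = complex_of_real (cos t)"
  by (auto simp: rotY_def sigma2_def ii_mult)

lemma rotY_idx'[simp]:
  "rotY t $$ (0,0) = complex_of_real (cos t)" "rotY t $$ (0,Suc 0) = - complex_of_real (sin t)"
  "rotY t $$ (Suc 0,0) = complex_of_real (sin t)" "rotY t $$ (Suc 0,Suc 0) = complex_of_real (cos t)"
  using rotY_idx by auto

lemma sigma_idx:
  "sigma1 $$ (0,0) = 0" "sigma1 $$ (0,1) = 1" "sigma1 $$ (1,0) = 1" "sigma1 $$ (1,1) = 0"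
  "sigma3 $$ (0,0) = 1" "sigma3 $$ (0,1) = 0" "sigma3 $$ (1,0) = 0" "sigma3 $$ (1,1) = -1"
  by (auto simp: sigma1_def sigma3_def)

lemma mult2: "A \<in> carrier_mat 2 2 \<Longrightarrow> B \<in> carrier_mat 2 2 \<Longrightarrow>
  A * B = mat 2 2 (\<lambda>(i,j). A $$ (i,0) * B $$ (0,j) + A $$ (i,1) * B $$ (1,j))"
  by (rule eq_matI) (auto simp: scalar_prod_def numeral_2_eq_2 sum.atLeast0_lessThan_Suc)

lemma sum_2: "(\<Sum>i\<in>{0..<2::nat}. f i) = f 0 + (f 1 :: complex)"
  by (simp add: numeral_2_eq_2)

lemma sigma_idx'[simp]:
  "sigma1 $$ (0,0) = 0" "sigma1 $$ (0,Suc 0) = 1" "sigma1 $$ (Suc 0,0) = 1" "sigma1 $$ (Suc 0,Suc 0) = 0"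
  "sigma3 $$ (0,0) = 1" "sigma3 $$ (0,Suc 0) = 0" "sigma3 $$ (Suc 0,0) = 0" "sigma3 $$ (Suc 0,Suc 0) = -1"
  by (auto simp: sigma1_def sigma3_def)

lemma sigma_dim[simp]: "dim_row sigma1 = 2" "dim_col sigma1 = 2" "dim_row sigma3 = 2" "dim_col sigma3 = 2"
  by (auto simp: sigma1_def sigma3_def)

lemma less2: "(i::nat) < 2 \<Longrightarrow> i = 0 \<or> i = 1" by auto

lemma mat2_eqI:
  fixes A B :: "complex mat"
  assumes "A \<in> carrier_mat 2 2" "B \<in> carrier_mat 2 2"
   "A $$ (0,0) = B $$ (0,0)" "A $$ (0,1) = B $$ (0,1)" "A $$ (1,0) = B $$ (1,0)" "A $$ (1,1) = B $$ (1,1)"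
  shows "A = B"
proof (rule eq_matI)
  fix i j assume "i < dim_row B" "j < dim_col B"
  then have "i = 0 \<or> i = 1" "j = 0 \<or> j = 1" using assms by auto
  then show "A $$ (i,j) = B $$ (i,j)" using assms by auto
qed (use assms in auto)

lemma adjrot_entries:
  fixes X :: "complex mat"
  assumes X: "X \<in> carrier_mat 2 2" and a: "a < 2" and b: "b < 2"
  shows "(adj (rotY t) * X * rotY t) $$ (a,b) =
     (adj (rotY t) $$ (a,0) * X $$ (0,0) + adj (rotY t) $$ (a,1) * X $$ (1,0)) * rotY t $$ (0,b)
   + (adj (rotY t) $$ (a,0) * X $$ (0,1) + adj (rotY t) $$ (a,1) * X $$ (1,1)) * rotY t $$ (1,b)"
proof -
  have c1: "adj (rotY t) * X \<in> carrier_mat 2 2" using X by (intro mult_carrier_mat adj_sq) auto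
  show ?thesis
    unfolding mat2_mult_entry[OF c1 rotY_carrier a b]
    using mat2_mult_entry[OF _ X a, of "adj (rotY t)"] mat2_mult_entry[OF _ X a, of "adj (rotY t)"] a b
    by (simp add: mat2_mult_entry[OF _ X a])
qed

lemma adjrot_idx:
  "adj (rotY t) $$ (0,0) = complex_of_real (cos t)" "adj (rotY t) $$ (0,1) = complex_of_real (sin t)"
  "adj (rotY t) $$ (1,0) = - complex_of_real (sin t)" "adj (rotY t) $$ (1,1) = complex_of_real (cos t)"
  by (auto simp: rotY_idx)

lemma rot_unitary: "adj (rotY t) * rotY t = 1\<^sub>m 2"
proof -
  have c: "adj (rotY t) * rotY t \<in> carrier_mat 2 2" by (intro mult_carrier_mat adj_sq) auto
  have s: "complex_of_real (cos t) * complex_of_real (cos t) + complex_of_real (sin t) * complex_of_real (sin t) = 1"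
    by (simp add: complex_eq_iff sin_cos_squared_add3)
  have s2: "(complex_of_real (cos t))\<^sup>2 + (complex_of_real (sin t))\<^sup>2 = 1"
    using s by (simp add: power2_eq_square)
  show ?thesis
    by (rule mat2_eqI[OF c]) (auto simp: scalar_prod_def sum_2 s s2 algebra_simps)
qed

lemma cos2': "cos ((t::real) * 2) = cos t * cos t - sin t * sin t"
  using cos_double[of t] by (simp add: power2_eq_square mult.commute)
lemma sin2': "sin ((t::real) * 2) = cos t * (sin t * 2)"
  using sin_double[of t] by (simp add: mult.commute mult.left_commute)

lemma rot_conj_Z: "adj (rotY t) * sigma3 * rotY t
   = complex_of_real (cos (2*t)) \<cdot>\<^sub>m sigma3 + complex_of_real (- sin (2*t)) \<cdot>\<^sub>m sigma1"
proof -
  have c: "adj (rotY t) * sigma3 * rotY t \<in> carrier_mat 2 2" by (intro mult_carrier_mat adj_sq) auto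
  show ?thesis
    by (rule mat2_eqI[OF c]) (simp_all add: mult2 sigma_idx cos2' sin2'
       complex_eq_iff power2_eq_square algebra_simps)
qed

lemma rot_conj_X: "adj (rotY t) * sigma1 * rotY t
   = complex_of_real (cos (2*t)) \<cdot>\<^sub>m sigma1 + complex_of_real (sin (2*t)) \<cdot>\<^sub>m sigma3"
proof -
  have c: "adj (rotY t) * sigma1 * rotY t \<in> carrier_mat 2 2" by (intro mult_carrier_mat adj_sq) auto
  show ?thesis
    by (rule mat2_eqI[OF c]) (simp_all add: mult2 sigma_idx cos2' sin2'
       complex_eq_iff power2_eq_square algebra_simps)
qed


abbreviation U2 :: "real measure" where "U2 \<equiv> uniform_measure lborel {0 .. 2 * pi}"

lemma U2_prob: "prob_space U2"
  by (rule prob_space_uniform_measure) (auto simp: emeasure_lborel_Icc)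

lemma U2_density: "U2 = density lborel (\<lambda>x. ennreal (indicator {0..2*pi} x / (2*pi)))"
proof -
  have "(\<lambda>x. indicator {0..2*pi} x / emeasure lborel {0..2*pi}) = (\<lambda>x. ennreal (indicator {0..2*pi} x / (2*pi)))"
  proof
    fix x :: real
    show "indicator {0..2*pi} x / emeasure lborel {0..2*pi} = ennreal (indicator {0..2*pi} x / (2*pi))"
      by (auto simp: emeasure_lborel_Icc indicator_def divide_ennreal[symmetric] ennreal_1[symmetric]
          simp del: ennreal_1)
  qed
  then show ?thesis unfolding uniform_measure_def by simp
qed

lemma U2_integral:
  fixes f :: "real \<Rightarrow> real"
  assumes f: "f \<in> borel_measurable borel"
  shows "integral\<^sup>L U2 f = integral\<^sup>L lborel (\<lambda>x. indicator {0..2*pi} x *\<^sub>R f x) / (2*pi)"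
proof -
  have f': "f \<in> borel_measurable lborel" using f by simp
  have g: "(\<lambda>x::real. indicator {0..2*pi} x / (2*pi)) \<in> borel_measurable lborel" by simp
  have "integral\<^sup>L (density lborel (\<lambda>x. ennreal (indicator {0..2*pi} x / (2*pi)))) f
     = integral\<^sup>L lborel (\<lambda>x. (indicator {0..2*pi} x / (2*pi)) *\<^sub>R f x)"
    by (rule integral_density[OF f' g]) (simp add: indicator_def)
  then have 1: "integral\<^sup>L U2 f = integral\<^sup>L lborel (\<lambda>x. (indicator {0..2*pi} x / (2*pi)) *\<^sub>R f x)"
    by (simp only: U2_density)
  have 2: "(\<lambda>x. (indicator {0..2*pi} x / (2*pi)) *\<^sub>R f x) = (\<lambda>x. (indicator {0..2*pi} x *\<^sub>R f x) / (2*pi))"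
    by (simp add: fun_eq_iff)
  show ?thesis unfolding 1 2 by (rule integral_divide_zero)
qed

lemma int_cos4: "integral\<^sup>L U2 (\<lambda>y. cos (4 * y)) = 0"
proof -
  have "integral\<^sup>L lborel (\<lambda>x. indicator {0..2*pi} x *\<^sub>R cos (4 * x)) = sin (4 * (2*pi)) / 4 - sin (4 * 0) / 4"
    by (rule integral_FTC_atLeastAtMost)
       (auto intro!: derivative_eq_intros continuous_intros simp: has_real_derivative_iff_has_vector_derivative[symmetric])
  also have "\<dots> = 0"
    using sin_npi_int[of "8"] by (simp add: mult.assoc)
  finally have "integral\<^sup>L lborel (\<lambda>x. indicator {0..2*pi} x *\<^sub>R cos (4 * x)) = 0" .
  moreover have "(\<lambda>y. cos (4 * y)) \<in> borel_measurable (borel :: real measure)" by measurable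
  ultimately show ?thesis by (simp add: U2_integral)
qed

lemma int_sin4: "integral\<^sup>L U2 (\<lambda>y. sin (4 * y)) = 0"
proof -
  have "integral\<^sup>L lborel (\<lambda>x. indicator {0..2*pi} x *\<^sub>R sin (4 * x)) = (- cos (4 * (2*pi)) / 4) - (- cos (4 * 0) / 4)"
    by (rule integral_FTC_atLeastAtMost)
       (auto intro!: derivative_eq_intros continuous_intros simp: has_real_derivative_iff_has_vector_derivative[symmetric])
  also have "\<dots> = 0"
    using cos_npi_int[of "8"] by (simp add: mult.assoc)
  finally have "integral\<^sup>L lborel (\<lambda>x. indicator {0..2*pi} x *\<^sub>R sin (4 * x)) = 0" .
  moreover have "(\<lambda>y. sin (4 * y)) \<in> borel_measurable (borel :: real measure)" by measurable
  ultimately show ?thesis by (simp add: U2_integral)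
qed


definition bmf :: "'a measure \<Rightarrow> ('a \<Rightarrow> real) \<Rightarrow> bool" where
  "bmf M f \<longleftrightarrow> f \<in> borel_measurable M \<and> (\<exists>B. \<forall>x. \<bar>f x\<bar> \<le> B)"

lemma bmf_add: "bmf M f \<Longrightarrow> bmf M g \<Longrightarrow> bmf M (\<lambda>x. f x + g x)"
  unfolding bmf_def
proof (elim conjE exE, intro conjI)
  fix B1 B2 assume "\<forall>x. \<bar>f x\<bar> \<le> B1" "\<forall>x. \<bar>g x\<bar> \<le> B2"
  then show "\<exists>B. \<forall>x. \<bar>f x + g x\<bar> \<le> B"
    by (intro exI[of _ "B1 + B2"]) (metis abs_triangle_ineq add_mono order_trans)
qed auto

lemma bmf_mult: "bmf M f \<Longrightarrow> bmf M g \<Longrightarrow> bmf M (\<lambda>x. f x * g x)"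
  unfolding bmf_def
proof (elim conjE exE, intro conjI)
  fix B1 B2 assume 1: "\<forall>x. \<bar>f x\<bar> \<le> B1" and 2: "\<forall>x. \<bar>g x\<bar> \<le> B2"
  show "\<exists>B. \<forall>x. \<bar>f x * g x\<bar> \<le> B"
  proof (intro exI allI)
    fix x
    have "\<bar>f x * g x\<bar> = \<bar>f x\<bar> * \<bar>g x\<bar>" by (simp add: abs_mult)
    also have "\<dots> \<le> B1 * B2" using 1 2 by (intro mult_mono) (auto intro: order_trans[OF abs_ge_zero])
    finally show "\<bar>f x * g x\<bar> \<le> B1 * B2" .
  qed
qed auto

lemma bmf_const: "bmf M (\<lambda>x. c)"
  unfolding bmf_def by auto

lemma bmf_scale: "bmf M f \<Longrightarrow> bmf M (\<lambda>x. c * f x)"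
  using bmf_mult[OF bmf_const] by blast

lemma bmf_integrable: assumes "finite_measure M" "bmf M f" shows "integrable M f"
proof -
  from assms(2) obtain B where m: "f \<in> borel_measurable M" and b: "\<forall>x. \<bar>f x\<bar> \<le> B"
    unfolding bmf_def by blast
  show ?thesis by (rule finite_measure.integrable_const_bound[OF assms(1), of f B]) (use m b in auto)
qed

lemma U2_meas: "h \<in> borel_measurable borel \<Longrightarrow> h \<in> borel_measurable U2"
  by (subst measurable_cong_sets[of U2 lborel borel borel]) auto

lemma comp_meas:
  assumes j: "j \<in> I" and h: "h \<in> borel_measurable borel"
  shows "(\<lambda>\<theta>. h (\<theta> j)) \<in> borel_measurable (Pi\<^sub>M I (\<lambda>_. U2))"
  by (rule measurable_compose[OF measurable_component_singleton[OF j] U2_meas[OF h]])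

lemma bmf_cos: "j \<in> I \<Longrightarrow> bmf (Pi\<^sub>M I (\<lambda>_. U2)) (\<lambda>\<theta>. cos (c * \<theta> j))"
  unfolding bmf_def by (auto intro!: comp_meas[where h="\<lambda>t. cos (c * t)"] exI[of _ 1])
lemma bmf_sin: "j \<in> I \<Longrightarrow> bmf (Pi\<^sub>M I (\<lambda>_. U2)) (\<lambda>\<theta>. sin (c * \<theta> j))"
  unfolding bmf_def by (auto intro!: comp_meas[where h="\<lambda>t. sin (c * t)"] exI[of _ 1])

lemma PiU_prob: "prob_space (Pi\<^sub>M I (\<lambda>_. U2))"
  by (rule prob_space_PiM) (simp add: U2_prob)

lemma indep_int_zero:
  assumes fin: "finite I" and j: "j \<in> I"
    and hm: "h \<in> borel_measurable borel" and hb: "\<And>t. \<bar>h t\<bar> \<le> 1" and h0: "integral\<^sup>L U2 h = 0"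
    and C: "bmf (Pi\<^sub>M I (\<lambda>_. U2)) C"
    and ind: "\<And>\<theta> y. C (\<theta>(j := y)) = C \<theta>"
  shows "integral\<^sup>L (Pi\<^sub>M I (\<lambda>_. U2)) (\<lambda>\<theta>. h (\<theta> j) * C \<theta>) = 0"
proof -
  interpret U: prob_space U2 by (rule U2_prob)
  interpret P: prob_space "Pi\<^sub>M I (\<lambda>_. U2)" by (rule PiU_prob)
  interpret ps: product_sigma_finite "\<lambda>_. U2"
    by unfold_locales
  define J where "J = I - {j}"
  have IJ: "I = insert j J" and jJ: "j \<notin> J" and fJ: "finite J" using j fin by (auto simp: J_def)
  have hC: "bmf (Pi\<^sub>M I (\<lambda>_. U2)) (\<lambda>\<theta>. h (\<theta> j) * C \<theta>)"
    by (rule bmf_mult[OF _ C]) (use comp_meas[OF j hm] hb in \<open>auto simp: bmf_def\<close>)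
  have int: "integrable (Pi\<^sub>M (insert j J) (\<lambda>_. U2)) (\<lambda>\<theta>. h (\<theta> j) * C \<theta>)"
    using bmf_integrable[OF P.finite_measure_axioms hC] IJ by simp
  have "integral\<^sup>L (Pi\<^sub>M (insert j J) (\<lambda>_. U2)) (\<lambda>\<theta>. h (\<theta> j) * C \<theta>)
     = integral\<^sup>L (Pi\<^sub>M J (\<lambda>_. U2)) (\<lambda>x. integral\<^sup>L U2 (\<lambda>y. h ((x(j := y)) j) * C (x(j := y))))"
    by (rule ps.product_integral_insert[OF fJ jJ int])
  also have "\<dots> = integral\<^sup>L (Pi\<^sub>M J (\<lambda>_. U2)) (\<lambda>x. 0)"
  proof (rule Bochner_Integration.integral_cong[OF refl])
    fix x
    have "integral\<^sup>L U2 (\<lambda>y. h ((x(j := y)) j) * C (x(j := y))) = integral\<^sup>L U2 (\<lambda>y. h y * C x)"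
      by (simp add: ind)
    also have "\<dots> = integral\<^sup>L U2 h * C x" by (rule integral_mult_left_zero)
    finally show "integral\<^sup>L U2 (\<lambda>y. h ((x(j := y)) j) * C (x(j := y))) = 0" by (simp add: h0)
  qed
  finally show ?thesis using IJ by simp
qed


lemma trig_sq:
  fixes a b cc ss :: real
  assumes "cc^2 + ss^2 = 1"
  shows "(cc * a + ss * b)^2 = (a^2/2 + b^2/2) + (cc^2 - ss^2) * ((a^2-b^2)/2) + (2 * ss * cc) * (a*b)"
proof -
  have "(a^2/2 + b^2/2) + (cc^2 - ss^2) * ((a^2-b^2)/2) + (2 * ss * cc) * (a*b) - (cc * a + ss * b)^2
      = (a^2+b^2) * (1 - (cc^2 + ss^2)) / 2"
    by (simp add: power2_eq_square field_simps)
  then show ?thesis using assms by simp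
qed

lemma sq_int:
  fixes A B g :: "(nat \<Rightarrow> real) \<Rightarrow> real" and j :: nat
  assumes fin: "finite I" and j: "j \<in> I"
    and A: "bmf (Pi\<^sub>M I (\<lambda>_. U2)) A" and B: "bmf (Pi\<^sub>M I (\<lambda>_. U2)) B"
    and indA: "\<And>\<theta> y. A (\<theta>(j := y)) = A \<theta>" and indB: "\<And>\<theta> y. B (\<theta>(j := y)) = B \<theta>"
    and g: "\<And>\<theta>. g \<theta> = cos (2 * \<theta> j) * A \<theta> + sin (2 * \<theta> j) * B \<theta>"
  shows "integral\<^sup>L (Pi\<^sub>M I (\<lambda>_. U2)) (\<lambda>\<theta>. (g \<theta>)^2)
     = integral\<^sup>L (Pi\<^sub>M I (\<lambda>_. U2)) (\<lambda>\<theta>. (A \<theta>)^2) / 2 + integral\<^sup>L (Pi\<^sub>M I (\<lambda>_. U2)) (\<lambda>\<theta>. (B \<theta>)^2) / 2"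
proof -
  let ?M = "Pi\<^sub>M I (\<lambda>_. U2)"
  interpret P: prob_space ?M by (rule PiU_prob)
  have fm: "finite_measure ?M" by (rule P.finite_measure_axioms)
  define C1 where "C1 = (\<lambda>\<theta>. ((A \<theta>)^2 - (B \<theta>)^2) / 2)"
  define C2 where "C2 = (\<lambda>\<theta>. A \<theta> * B \<theta>)"
  have A2: "bmf ?M (\<lambda>\<theta>. (A \<theta>)^2)" using bmf_mult[OF A A] by (simp add: power2_eq_square)
  have B2: "bmf ?M (\<lambda>\<theta>. (B \<theta>)^2)" using bmf_mult[OF B B] by (simp add: power2_eq_square)
  have bC1: "bmf ?M C1" unfolding C1_def
    using bmf_scale[OF bmf_add[OF A2 bmf_scale[OF B2, of "-1"]], of "1/2"] by (simp add: field_simps)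
  have bC2: "bmf ?M C2" unfolding C2_def by (rule bmf_mult[OF A B])
  have iC1: "\<And>\<theta> y. C1 (\<theta>(j := y)) = C1 \<theta>" unfolding C1_def by (simp add: indA indB)
  have iC2: "\<And>\<theta> y. C2 (\<theta>(j := y)) = C2 \<theta>" unfolding C2_def by (simp add: indA indB)
  have pt: "\<And>\<theta>. (g \<theta>)^2 = ((A \<theta>)^2 / 2 + (B \<theta>)^2 / 2) + cos (4 * \<theta> j) * C1 \<theta> + sin (4 * \<theta> j) * C2 \<theta>"
  proof -
    fix \<theta> :: "nat \<Rightarrow> real"
    have c4: "cos (4 * \<theta> j) = (cos (2 * \<theta> j))^2 - (sin (2 * \<theta> j))^2"
      using cos_double[of "2 * \<theta> j"] by simp
    have s4: "sin (4 * \<theta> j) = 2 * sin (2 * \<theta> j) * cos (2 * \<theta> j)"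
      using sin_double[of "2 * \<theta> j"] by simp
    show "(g \<theta>)^2 = ((A \<theta>)^2 / 2 + (B \<theta>)^2 / 2) + cos (4 * \<theta> j) * C1 \<theta> + sin (4 * \<theta> j) * C2 \<theta>"
      unfolding g C1_def C2_def c4 s4 by (rule trig_sq) (simp add: add.commute)
  qed
  have z1: "integral\<^sup>L ?M (\<lambda>\<theta>. cos (4 * \<theta> j) * C1 \<theta>) = 0"
    by (rule indep_int_zero[OF fin j _ _ int_cos4 bC1 iC1]) auto
  have z2: "integral\<^sup>L ?M (\<lambda>\<theta>. sin (4 * \<theta> j) * C2 \<theta>) = 0"
    by (rule indep_int_zero[OF fin j _ _ int_sin4 bC2 iC2]) auto
  have i1: "integrable ?M (\<lambda>\<theta>. (A \<theta>)^2 / 2 + (B \<theta>)^2 / 2)"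
    using bmf_integrable[OF fm bmf_add[OF bmf_scale[OF A2, of "1/2"] bmf_scale[OF B2, of "1/2"]]] by simp
  have i2: "integrable ?M (\<lambda>\<theta>. cos (4 * \<theta> j) * C1 \<theta>)"
    by (rule bmf_integrable[OF fm bmf_mult[OF bmf_cos[OF j] bC1]])
  have i3: "integrable ?M (\<lambda>\<theta>. sin (4 * \<theta> j) * C2 \<theta>)"
    by (rule bmf_integrable[OF fm bmf_mult[OF bmf_sin[OF j] bC2]])
  have "integral\<^sup>L ?M (\<lambda>\<theta>. (g \<theta>)^2) = integral\<^sup>L ?M (\<lambda>\<theta>. ((A \<theta>)^2 / 2 + (B \<theta>)^2 / 2) + cos (4 * \<theta> j) * C1 \<theta> + sin (4 * \<theta> j) * C2 \<theta>)"
    by (simp only: pt)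
  also have "\<dots> = integral\<^sup>L ?M (\<lambda>\<theta>. (A \<theta>)^2 / 2 + (B \<theta>)^2 / 2)"
    using i1 i2 i3 z1 z2 by simp
  also have "\<dots> = integral\<^sup>L ?M (\<lambda>\<theta>. (A \<theta>)^2) / 2 + integral\<^sup>L ?M (\<lambda>\<theta>. (B \<theta>)^2) / 2"
  proof -
    have "integrable ?M (\<lambda>\<theta>. (A \<theta>)^2)" "integrable ?M (\<lambda>\<theta>. (B \<theta>)^2)"
      using bmf_integrable[OF fm A2] bmf_integrable[OF fm B2] by auto
    then show ?thesis by simp
  qed
  finally show ?thesis .
qed

lemma sq_int_geA:
  fixes A B g :: "(nat \<Rightarrow> real) \<Rightarrow> real" and j :: nat
  assumes fin: "finite I" and j: "j \<in> I"
    and A: "bmf (Pi\<^sub>M I (\<lambda>_. U2)) A" and B: "bmf (Pi\<^sub>M I (\<lambda>_. U2)) B"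
    and indA: "\<And>\<theta> y. A (\<theta>(j := y)) = A \<theta>" and indB: "\<And>\<theta> y. B (\<theta>(j := y)) = B \<theta>"
    and g: "\<And>\<theta>. g \<theta> = cos (2 * \<theta> j) * A \<theta> + sin (2 * \<theta> j) * B \<theta>"
  shows "integral\<^sup>L (Pi\<^sub>M I (\<lambda>_. U2)) (\<lambda>\<theta>. (g \<theta>)^2) \<ge> integral\<^sup>L (Pi\<^sub>M I (\<lambda>_. U2)) (\<lambda>\<theta>. (A \<theta>)^2) / 2"
    and "integral\<^sup>L (Pi\<^sub>M I (\<lambda>_. U2)) (\<lambda>\<theta>. (g \<theta>)^2) \<ge> integral\<^sup>L (Pi\<^sub>M I (\<lambda>_. U2)) (\<lambda>\<theta>. (B \<theta>)^2) / 2"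
proof -
  have "integral\<^sup>L (Pi\<^sub>M I (\<lambda>_. U2)) (\<lambda>\<theta>. (A \<theta>)^2) \<ge> 0" "integral\<^sup>L (Pi\<^sub>M I (\<lambda>_. U2)) (\<lambda>\<theta>. (B \<theta>)^2) \<ge> 0"
    by (auto intro!: integral_nonneg_AE)
  then show "integral\<^sup>L (Pi\<^sub>M I (\<lambda>_. U2)) (\<lambda>\<theta>. (g \<theta>)^2) \<ge> integral\<^sup>L (Pi\<^sub>M I (\<lambda>_. U2)) (\<lambda>\<theta>. (A \<theta>)^2) / 2"
    and "integral\<^sup>L (Pi\<^sub>M I (\<lambda>_. U2)) (\<lambda>\<theta>. (g \<theta>)^2) \<ge> integral\<^sup>L (Pi\<^sub>M I (\<lambda>_. U2)) (\<lambda>\<theta>. (B \<theta>)^2) / 2"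
    unfolding sq_int[OF assms] by auto
qed


lemma unitary_mult:
  assumes A: "A \<in> carrier_mat N N" and B: "B \<in> carrier_mat N N"
    and uA: "adj A * A = 1\<^sub>m N" and uB: "adj B * B = 1\<^sub>m N"
  shows "adj (A * B) * (A * B) = 1\<^sub>m N"
proof -
  have aA: "adj A \<in> carrier_mat N N" and aB: "adj B \<in> carrier_mat N N" using A B by auto
  have "adj (A * B) * (A * B) = adj B * ((adj A * A) * B)"
    using A B aA aB by (simp add: adj_mult[OF A B] assoc_mult_mat[of _ N N _ N _ N] sq_mult)
  also have "\<dots> = 1\<^sub>m N" using uA uB B by simp
  finally show ?thesis .
qed

lemma commute_mult:
  assumes A: "A \<in> carrier_mat N N" and B: "B \<in> carrier_mat N N" and P: "P \<in> carrier_mat N N"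
    and cA: "A * P = P * A" and cB: "B * P = P * B"
  shows "(A * B) * P = P * (A * B)"
proof -
  have "(A * B) * P = A * (B * P)" using A B P by (simp add: assoc_mult_mat[of _ N N _ N _ N])
  also have "\<dots> = (A * P) * B" using A B P cB by (simp add: assoc_mult_mat[of _ N N _ N _ N])
  also have "\<dots> = P * (A * B)" using A B P cA by (simp add: assoc_mult_mat[of _ N N _ N _ N])
  finally show ?thesis .
qed

lemma oq_rot_unitary: "m < n \<Longrightarrow> adj (oq n m (rotY t)) * oq n m (rotY t) = 1\<^sub>m (2^n)"
  by (simp add: oq_adj oq_mult_same rot_unitary oq_one)

lemma adj_one: "adj (1\<^sub>m N) = (1\<^sub>m N :: complex mat)"
  by (rule eq_matI) auto

definition Wq :: "nat \<Rightarrow> (nat \<Rightarrow> real) \<Rightarrow> nat list \<Rightarrow> complex mat" where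
  "Wq n \<theta> qs = foldr (\<lambda>q M. on_qubit n q (rotY (\<theta> (q - 1))) * M) qs (1\<^sub>m (2 ^ n))"

lemma Wq_Cons: "Wq n \<theta> (q # qs) = oq n (n - q) (rotY (\<theta> (q - 1))) * Wq n \<theta> qs"
  by (simp add: Wq_def on_qubit_oq)

lemma Wq_carrier: "Wq n \<theta> qs \<in> carrier_mat (2^n) (2^n)"
  by (induction qs) (auto simp: Wq_def on_qubit_oq)

lemma Wq_props:
  assumes "\<forall>q \<in> set qs. 2 \<le> q \<and> q \<le> n"
  shows "adj (Wq n \<theta> qs) * Wq n \<theta> qs = 1\<^sub>m (2^n) \<and>
         Wq n \<theta> qs * oq n (n - 1) P = oq n (n - 1) P * Wq n \<theta> qs"
  using assms
proof (induction qs)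
  case Nil
  then show ?case by (simp add: Wq_def adj_one)
next
  case (Cons q qs)
  then have q: "2 \<le> q" "q \<le> n" and IH: "adj (Wq n \<theta> qs) * Wq n \<theta> qs = 1\<^sub>m (2^n)"
     "Wq n \<theta> qs * oq n (n - 1) P = oq n (n - 1) P * Wq n \<theta> qs" by auto
  have m: "n - q < n" "n - 1 < n" "n - q \<noteq> n - 1" using q by auto
  show ?case unfolding Wq_Cons
  proof
    show "adj (oq n (n - q) (rotY (\<theta> (q - 1))) * Wq n \<theta> qs) * (oq n (n - q) (rotY (\<theta> (q - 1))) * Wq n \<theta> qs) = 1\<^sub>m (2 ^ n)"
      by (rule unitary_mult[OF oq_carrier Wq_carrier oq_rot_unitary[OF m(1)] IH(1)])
    show "oq n (n - q) (rotY (\<theta> (q - 1))) * Wq n \<theta> qs * oq n (n - 1) P = oq n (n - 1) P * (oq n (n - q) (rotY (\<theta> (q - 1))) * Wq n \<theta> qs)"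
      by (rule commute_mult[OF oq_carrier Wq_carrier oq_carrier oq_comm[OF m] IH(2)])
  qed
qed

lemma V1_eq: "n \<ge> 1 \<Longrightarrow> V1 n \<theta> = oq n (n - 1) (rotY (\<theta> 0)) * Wq n \<theta> [2..<n+1]"
proof -
  assume n: "n \<ge> 1"
  have "[1..<n+1] = 1 # [Suc 1..<n+1]" using n by (intro upt_conv_Cons) simp
  then have "[1..<n+1] = 1 # [2..<n+1]" by (simp only: Suc_1)
  then show ?thesis unfolding V1_def Wq_def[symmetric] by (simp add: Wq_Cons)
qed

lemma V1_carrier: "V1 n \<theta> \<in> carrier_mat (2^n) (2^n)"
  unfolding V1_def Wq_def[symmetric] by (rule Wq_carrier)

lemma Vl_carrier: "Vl n nc \<theta> l \<in> carrier_mat (2^n) (2^n)"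
  by (simp add: Vl_def V1_carrier on_qubit_oq)

lemma CX_carrier: "CX n nc l \<in> carrier_mat (2^n) (2^n)"
  by (simp add: CX_def cnot_pm)

lemma SC_carrier: "SC_partial n nc \<theta> k \<in> carrier_mat (2^n) (2^n)"
  by (induction k) (simp_all add: Vl_carrier CX_carrier sq_mult)

lemma SC_step:
  assumes "1 \<le> k"
  shows "SC_partial n nc \<theta> k = Vl n nc \<theta> (k+1) * (CX n nc k * SC_partial n nc \<theta> (k-1))"
proof -
  obtain k' where k: "k = Suc k'" using assms by (cases k) auto
  show ?thesis unfolding k
    using Vl_carrier CX_carrier SC_carrier
    by (simp add: assoc_mult_mat[of _ "2^n" "2^n" _ "2^n" _ "2^n"])
qed

lemma Vl_top: "1 \<le> k \<Longrightarrow> n - nc \<le> k \<Longrightarrow> Vl n nc \<theta> (k+1) = oq n (n-1) (rotY (\<theta> (n + k - 1)))"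
  by (simp add: Vl_def on_qubit_oq)
lemma Vl_mid: "1 \<le> k \<Longrightarrow> k + 1 \<le> n - nc \<Longrightarrow> Vl n nc \<theta> (k+1) = oq n k (rotY (\<theta> (n + k - 1)))"
  by (simp add: Vl_def on_qubit_oq)
lemma CX_top: assumes "1 \<le> k" "k \<le> n - 1" "n - nc \<le> k" shows "CX n nc k = pm n (cpi (k - 1) (n - 1))"
proof -
  have "\<not> k \<le> n - 1 - nc" "n - (n + 1 - k) = k - 1" using assms by arith+
  then show ?thesis by (simp add: CX_def cnot_pm)
qed
lemma CX_mid: assumes "1 \<le> k" "k + 1 \<le> n - nc" shows "CX n nc k = pm n (cpi (k - 1) k)"
proof -
  have "k \<le> n - 1 - nc" "n - (n + 1 - k) = k - 1" "n - (n - k) = k" using assms by arith+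
  then show ?thesis by (simp add: CX_def cnot_pm)
qed

definition Qf :: "complex mat \<Rightarrow> complex mat \<Rightarrow> complex mat \<Rightarrow> real" where
  "Qf \<rho> P S = Re (mtrace (P * S * \<rho> * adj S))"

lemma lin_trace:
  assumes A: "A \<in> carrier_mat N N" and B: "B \<in> carrier_mat N N" and S: "S \<in> carrier_mat N N"
    and R: "R \<in> carrier_mat N N"
  shows "mtrace ((a \<cdot>\<^sub>m A + b \<cdot>\<^sub>m B) * S * R * adj S)
     = a * mtrace (A * S * R * adj S) + b * mtrace (B * S * R * adj S)"
proof -
  have aS: "adj S \<in> carrier_mat N N" using S by auto
  have X: "S * R * adj S \<in> carrier_mat N N" using S R aS by (simp add: sq_mult)
  have "(a \<cdot>\<^sub>m A + b \<cdot>\<^sub>m B) * S * R * adj S = (a \<cdot>\<^sub>m A + b \<cdot>\<^sub>m B) * (S * R * adj S)"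
    using A B S R aS by (simp add: assoc_mult_mat[of _ N N _ N _ N] sq_mult)
  also have "\<dots> = (a \<cdot>\<^sub>m A) * (S * R * adj S) + (b \<cdot>\<^sub>m B) * (S * R * adj S)"
    by (rule add_mult_distrib_mat[OF smult_carrier_mat[OF A] smult_carrier_mat[OF B] X])
  also have "(a \<cdot>\<^sub>m A) * (S * R * adj S) = a \<cdot>\<^sub>m (A * (S * R * adj S))"
    by (rule mult_smult_assoc_mat[OF A X])
  also have "(b \<cdot>\<^sub>m B) * (S * R * adj S) = b \<cdot>\<^sub>m (B * (S * R * adj S))"
    by (rule mult_smult_assoc_mat[OF B X])
  also have "A * (S * R * adj S) = A * S * R * adj S"
    using A B S R aS by (simp add: assoc_mult_mat[of _ N N _ N _ N] sq_mult)
  also have "B * (S * R * adj S) = B * S * R * adj S"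
    using A B S R aS by (simp add: assoc_mult_mat[of _ N N _ N _ N] sq_mult)
  finally show ?thesis
    using A B S R aS by (simp add: mtrace_add[of _ N] mtrace_smult[of _ N] sq_mult)
qed

lemma Q_rot:
  assumes m: "m < n" and S: "S \<in> carrier_mat (2^n) (2^n)" and R: "\<rho> \<in> carrier_mat (2^n) (2^n)"
  shows "Qf \<rho> (oq n m sigma3) (oq n m (rotY t) * S) = cos (2*t) * Qf \<rho> (oq n m sigma3) S + sin (2*t) * (- Qf \<rho> (oq n m sigma1) S)"
    and "Qf \<rho> (oq n m sigma1) (oq n m (rotY t) * S) = cos (2*t) * Qf \<rho> (oq n m sigma1) S + sin (2*t) * Qf \<rho> (oq n m sigma3) S"
proof -
  have aR: "adj (rotY t) \<in> carrier_mat 2 2" by simp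
  have c3: "adj (rotY t) * sigma3 \<in> carrier_mat 2 2" by (intro mult_carrier_mat) auto
  have c1: "adj (rotY t) * sigma1 \<in> carrier_mat 2 2" by (intro mult_carrier_mat) auto
  have e3: "adj (oq n m (rotY t)) * oq n m sigma3 * oq n m (rotY t)
     = complex_of_real (cos (2*t)) \<cdot>\<^sub>m oq n m sigma3 + complex_of_real (- sin (2*t)) \<cdot>\<^sub>m oq n m sigma1"
    by (simp add: oq_adj oq_mult_same[OF aR] oq_mult_same[OF c3] rot_conj_Z oq_lin m)
  have e1: "adj (oq n m (rotY t)) * oq n m sigma1 * oq n m (rotY t)
     = complex_of_real (cos (2*t)) \<cdot>\<^sub>m oq n m sigma1 + complex_of_real (sin (2*t)) \<cdot>\<^sub>m oq n m sigma3"
    by (simp add: oq_adj oq_mult_same[OF aR] oq_mult_same[OF c1] rot_conj_X oq_lin m)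
  show "Qf \<rho> (oq n m sigma3) (oq n m (rotY t) * S) = cos (2*t) * Qf \<rho> (oq n m sigma3) S + sin (2*t) * (- Qf \<rho> (oq n m sigma1) S)"
    unfolding Qf_def conj_trace[OF oq_carrier oq_carrier S R] e3 lin_trace[OF oq_carrier oq_carrier S R]
    by simp
  show "Qf \<rho> (oq n m sigma1) (oq n m (rotY t) * S) = cos (2*t) * Qf \<rho> (oq n m sigma1) S + sin (2*t) * Qf \<rho> (oq n m sigma3) S"
    unfolding Qf_def conj_trace[OF oq_carrier oq_carrier S R] e1 lin_trace[OF oq_carrier oq_carrier S R]
    by simp
qed

lemma Q_comm:
  assumes G: "G \<in> carrier_mat (2^n) (2^n)" and P: "P \<in> carrier_mat (2^n) (2^n)"
    and S: "S \<in> carrier_mat (2^n) (2^n)" and R: "\<rho> \<in> carrier_mat (2^n) (2^n)"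
    and u: "adj G * G = 1\<^sub>m (2^n)" and c: "G * P = P * G"
  shows "Qf \<rho> P (G * S) = Qf \<rho> P S"
  unfolding Qf_def conj_trace[OF P G S R] conj_commute[OF P G u c] ..


definition good :: "nat \<Rightarrow> (nat \<Rightarrow> real) measure \<Rightarrow> ((nat \<Rightarrow> real) \<Rightarrow> complex mat) \<Rightarrow> bool" where
  "good n M F \<longleftrightarrow> (\<forall>\<theta>. F \<theta> \<in> carrier_mat (2^n) (2^n)) \<and>
     (\<forall>i<2^n. \<forall>j<2^n. (\<lambda>\<theta>. F \<theta> $$ (i,j)) \<in> borel_measurable M) \<and>
     (\<exists>B. \<forall>\<theta> i j. i < 2^n \<longrightarrow> j < 2^n \<longrightarrow> cmod (F \<theta> $$ (i,j)) \<le> B)"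

lemma good_const:
  assumes A: "A \<in> carrier_mat (2^n) (2^n)"
  shows "good n M (\<lambda>_. A)"
  unfolding good_def
proof (intro conjI allI impI)
  show "\<exists>B. \<forall>\<theta> i j. i < 2^n \<longrightarrow> j < 2^n \<longrightarrow> cmod (A $$ (i,j)) \<le> B"
  proof (intro exI allI impI)
    fix i j :: nat assume i: "i < 2^n" and j: "j < 2^n"
    have "cmod (A $$ (i,j)) \<le> (\<Sum>j'<2^n. cmod (A $$ (i,j')))"
      by (rule member_le_sum) (use j in auto)
    also have "\<dots> \<le> (\<Sum>i'<2^n. \<Sum>j'<2^n. cmod (A $$ (i',j')))"
      by (rule member_le_sum[where f="\<lambda>i'. \<Sum>j'<2^n. cmod (A $$ (i',j'))"]) (use i in \<open>auto intro: sum_nonneg\<close>)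
    finally show "cmod (A $$ (i,j)) \<le> (\<Sum>i'<2^n. \<Sum>j'<2^n. cmod (A $$ (i',j')))" .
  qed
qed (use A in auto)

lemma good_mult:
  assumes F: "good n M F" and G: "good n M G"
  shows "good n M (\<lambda>\<theta>. F \<theta> * G \<theta>)"
proof -
  from F obtain B1 where cF: "\<And>\<theta>. F \<theta> \<in> carrier_mat (2^n) (2^n)"
    and mF: "\<And>i j. i < 2^n \<Longrightarrow> j < 2^n \<Longrightarrow> (\<lambda>\<theta>. F \<theta> $$ (i,j)) \<in> borel_measurable M"
    and bF: "\<And>\<theta> i j. i < 2^n \<Longrightarrow> j < 2^n \<Longrightarrow> cmod (F \<theta> $$ (i,j)) \<le> B1"
    unfolding good_def by blast
  from G obtain B2 where cG: "\<And>\<theta>. G \<theta> \<in> carrier_mat (2^n) (2^n)"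
    and mG: "\<And>i j. i < 2^n \<Longrightarrow> j < 2^n \<Longrightarrow> (\<lambda>\<theta>. G \<theta> $$ (i,j)) \<in> borel_measurable M"
    and bG: "\<And>\<theta> i j. i < 2^n \<Longrightarrow> j < 2^n \<Longrightarrow> cmod (G \<theta> $$ (i,j)) \<le> B2"
    unfolding good_def by blast
  have e: "\<And>\<theta> i j. i < 2^n \<Longrightarrow> j < 2^n \<Longrightarrow> (F \<theta> * G \<theta>) $$ (i,j) = (\<Sum>k<2^n. F \<theta> $$ (i,k) * G \<theta> $$ (k,j))"
    by (rule mult_entry[OF cF cG])
  have B1: "0 \<le> B1" using bF[of 0 0] by (meson norm_ge_zero order_trans zero_less_numeral zero_less_power)
  show ?thesis unfolding good_def
  proof (intro conjI allI impI)
    fix \<theta> show "F \<theta> * G \<theta> \<in> carrier_mat (2^n) (2^n)" using cF cG by (rule mult_carrier_mat)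
  next
    fix i j :: nat assume i: "i < 2^n" and j: "j < 2^n"
    have "(\<lambda>\<theta>. (F \<theta> * G \<theta>) $$ (i,j)) = (\<lambda>\<theta>. \<Sum>k<2^n. F \<theta> $$ (i,k) * G \<theta> $$ (k,j))"
      using e[OF i j] by auto
    moreover have "(\<lambda>\<theta>. \<Sum>k<2^n. F \<theta> $$ (i,k) * G \<theta> $$ (k,j)) \<in> borel_measurable M"
      by (rule borel_measurable_sum, rule borel_measurable_times) (use mF mG i j in auto)
    ultimately show "(\<lambda>\<theta>. (F \<theta> * G \<theta>) $$ (i,j)) \<in> borel_measurable M" by simp
  next
    show "\<exists>B. \<forall>\<theta> i j. i < 2^n \<longrightarrow> j < 2^n \<longrightarrow> cmod ((F \<theta> * G \<theta>) $$ (i,j)) \<le> B"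
    proof (intro exI allI impI)
      fix \<theta> and i j :: nat assume i: "i < 2^n" and j: "j < 2^n"
      have "cmod ((F \<theta> * G \<theta>) $$ (i,j)) \<le> (\<Sum>k<2^n. cmod (F \<theta> $$ (i,k) * G \<theta> $$ (k,j)))"
        unfolding e[OF i j] by (rule norm_sum)
      also have "\<dots> \<le> (\<Sum>k<(2::nat)^n. B1 * B2)"
        by (rule sum_mono) (use bF bG i j B1 in \<open>auto simp: norm_mult intro!: mult_mono\<close>)
      finally show "cmod ((F \<theta> * G \<theta>) $$ (i,j)) \<le> 2^n * (B1 * B2)" by simp
    qed
  qed
qed

lemma cnj_meas: "f \<in> borel_measurable M \<Longrightarrow> (\<lambda>x. cnj (f x)) \<in> borel_measurable M"
  by (simp add: borel_measurable_complex_iff borel_measurable_uminus)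

lemma good_adj:
  assumes F: "good n M F"
  shows "good n M (\<lambda>\<theta>. adj (F \<theta>))"
proof -
  from F obtain B1 where cF: "\<And>\<theta>. F \<theta> \<in> carrier_mat (2^n) (2^n)"
    and mF: "\<And>i j. i < 2^n \<Longrightarrow> j < 2^n \<Longrightarrow> (\<lambda>\<theta>. F \<theta> $$ (i,j)) \<in> borel_measurable M"
    and bF: "\<And>\<theta> i j. i < 2^n \<Longrightarrow> j < 2^n \<Longrightarrow> cmod (F \<theta> $$ (i,j)) \<le> B1"
    unfolding good_def by blast
  have e: "adj (F \<theta>) $$ (i,j) = cnj (F \<theta> $$ (j,i))" if "i < 2^n" "j < 2^n" for \<theta> i j
  proof -
    have "dim_row (F \<theta>) = 2^n" "dim_col (F \<theta>) = 2^n" using cF[of \<theta>] by auto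
    then show ?thesis using that by simp
  qed
  show ?thesis unfolding good_def
  proof (intro conjI allI impI)
    fix \<theta> show "adj (F \<theta>) \<in> carrier_mat (2^n) (2^n)" using cF by simp
  next
    fix i j :: nat assume i: "i < 2^n" and j: "j < 2^n"
    show "(\<lambda>\<theta>. adj (F \<theta>) $$ (i,j)) \<in> borel_measurable M"
      unfolding e[OF i j] by (rule cnj_meas[OF mF[OF j i]])
  next
    show "\<exists>B. \<forall>\<theta> i j. i < 2^n \<longrightarrow> j < 2^n \<longrightarrow> cmod (adj (F \<theta>) $$ (i,j)) \<le> B"
      using bF e by (intro exI[of _ B1]) auto
  qed
qed

lemma cos_meas: assumes "j \<in> I" shows "(\<lambda>\<theta>. complex_of_real (cos (\<theta> j))) \<in> borel_measurable (Pi\<^sub>M I (\<lambda>_. U2))"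
  by (rule comp_meas[OF assms]) measurable
lemma sin_meas: assumes "j \<in> I" shows "(\<lambda>\<theta>. complex_of_real (sin (\<theta> j))) \<in> borel_measurable (Pi\<^sub>M I (\<lambda>_. U2))"
  by (rule comp_meas[OF assms]) measurable

lemma rot_entry_meas:
  assumes j: "j \<in> I" and a: "a < 2" and b: "b < 2"
  shows "(\<lambda>\<theta>. rotY (\<theta> j) $$ (a,b)) \<in> borel_measurable (Pi\<^sub>M I (\<lambda>_. U2))"
proof -
  have c: "(\<lambda>\<theta>. complex_of_real (cos (\<theta> j))) \<in> borel_measurable (Pi\<^sub>M I (\<lambda>_. U2))"
    by (rule comp_meas[OF j]) simp
  have s: "(\<lambda>\<theta>. complex_of_real (sin (\<theta> j))) \<in> borel_measurable (Pi\<^sub>M I (\<lambda>_. U2))"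
    by (rule comp_meas[OF j]) simp
  have ms: "(\<lambda>\<theta>. - complex_of_real (sin (\<theta> j))) \<in> borel_measurable (Pi\<^sub>M I (\<lambda>_. U2))"
    using borel_measurable_uminus[OF s] by simp
  from a b have "(a = 0 \<or> a = 1) \<and> (b = 0 \<or> b = 1)" by auto
  then show ?thesis using c s ms by (auto simp: rotY_idx)
qed

lemma rot_entry_bound:
  assumes a: "a < 2" and b: "b < 2"
  shows "cmod (rotY t $$ (a,b)) \<le> 1"
proof -
  from a b have "(a = 0 \<or> a = 1) \<and> (b = 0 \<or> b = 1)" by auto
  then show ?thesis by (auto simp: rotY_idx)
qed

lemma good_rot:
  assumes j: "j \<in> I" and m: "m < n"
  shows "good n (Pi\<^sub>M I (\<lambda>_. U2)) (\<lambda>\<theta>. oq n m (rotY (\<theta> j)))"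
  unfolding good_def
proof (intro conjI allI impI)
  fix i i' :: nat assume i: "i < 2^n" and i': "i' < 2^n"
  show "(\<lambda>\<theta>. oq n m (rotY (\<theta> j)) $$ (i,i')) \<in> borel_measurable (Pi\<^sub>M I (\<lambda>_. U2))"
    unfolding oq_index[OF i i'] by (cases "unset_bit m i = unset_bit m i'") (auto intro!: rot_entry_meas[OF j] cos_meas[OF j] sin_meas[OF j] borel_measurable_uminus)
next
  show "\<exists>B. \<forall>\<theta> i i'. i < 2^n \<longrightarrow> i' < 2^n \<longrightarrow> cmod (oq n m (rotY (\<theta> j)) $$ (i,i')) \<le> B"
    by (intro exI[of _ 1]) (auto simp: oq_index intro!: rot_entry_bound)
qed auto

lemma good_trace:
  assumes F: "good n M F"
  shows "bmf M (\<lambda>\<theta>. Re (mtrace (F \<theta>)))"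
proof -
  from F obtain B1 where cF: "\<And>\<theta>. F \<theta> \<in> carrier_mat (2^n) (2^n)"
    and mF: "\<And>i j. i < 2^n \<Longrightarrow> j < 2^n \<Longrightarrow> (\<lambda>\<theta>. F \<theta> $$ (i,j)) \<in> borel_measurable M"
    and bF: "\<And>\<theta> i j. i < 2^n \<Longrightarrow> j < 2^n \<Longrightarrow> cmod (F \<theta> $$ (i,j)) \<le> B1"
    unfolding good_def by blast
  have e: "mtrace (F \<theta>) = (\<Sum>i<2^n. F \<theta> $$ (i,i))" for \<theta>
  proof -
    have "dim_row (F \<theta>) = 2^n" using cF[of \<theta>] by auto
    then show ?thesis by (simp add: mtrace_def)
  qed
  have m: "(\<lambda>\<theta>. \<Sum>i<2^n. F \<theta> $$ (i,i)) \<in> borel_measurable M"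
    by (rule borel_measurable_sum) (use mF in auto)
  show ?thesis unfolding bmf_def e
  proof (intro conjI exI allI)
    show "(\<lambda>\<theta>. Re (\<Sum>i<2^n. F \<theta> $$ (i,i))) \<in> borel_measurable M"
      using m by (simp add: borel_measurable_complex_iff)
  next
    fix \<theta>
    have "\<bar>Re (\<Sum>i<2^n. F \<theta> $$ (i,i))\<bar> \<le> cmod (\<Sum>i<2^n. F \<theta> $$ (i,i))" by (rule abs_Re_le_cmod)
    also have "\<dots> \<le> (\<Sum>i<2^n. cmod (F \<theta> $$ (i,i)))" by (rule norm_sum)
    also have "\<dots> \<le> (\<Sum>i<(2::nat)^n. B1)" by (rule sum_mono) (use bF in auto)
    finally show "\<bar>Re (\<Sum>i<2^n. F \<theta> $$ (i,i))\<bar> \<le> 2^n * B1" by simp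
  qed
qed

lemma good_Wq:
  assumes "\<forall>q \<in> set qs. 1 \<le> q \<and> q \<le> n \<and> q - 1 \<in> I"
  shows "good n (Pi\<^sub>M I (\<lambda>_. U2)) (\<lambda>\<theta>. Wq n \<theta> qs)"
  using assms
proof (induction qs)
  case Nil
  then show ?case by (simp add: Wq_def good_const)
next
  case (Cons q qs)
  then show ?case unfolding Wq_Cons
    by (intro good_mult good_rot) auto
qed

lemma good_SC:
  assumes n: "2 \<le> n" and k: "k \<le> n - 1"
  shows "good n (Pi\<^sub>M {..<2*n-1} (\<lambda>_. U2)) (\<lambda>\<theta>. SC_partial n nc \<theta> k)"
  using k
proof (induction k)
  case 0
  have e: "(\<lambda>\<theta>. SC_partial n nc \<theta> 0) = (\<lambda>\<theta>. Wq n \<theta> [1..<n+1])"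
    by (simp add: Vl_def V1_def Wq_def)
  show ?case unfolding e by (rule good_Wq) (use n in auto)
next
  case (Suc k)
  have VL: "Vl n nc \<theta> (k+2) = oq n (n - (if k + 2 \<le> n - nc then n + 1 - (k+2) else 1)) (rotY (\<theta> (n + k)))" for \<theta>
    by (simp add: Vl_def on_qubit_oq)
  have g1: "good n (Pi\<^sub>M {..<2*n-1} (\<lambda>_. U2)) (\<lambda>\<theta>. Vl n nc \<theta> (k+2))"
    unfolding VL by (rule good_rot) (use Suc.prems n in auto)
  have g2: "good n (Pi\<^sub>M {..<2*n-1} (\<lambda>_. U2)) (\<lambda>\<theta>. CX n nc (k+1))"
    by (rule good_const[OF CX_carrier])
  show ?case
    using good_mult[OF good_mult[OF g1 g2] Suc.IH] Suc.prems by simp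
qed

lemma Wq_indep: "\<forall>q\<in>set qs. \<theta> (q - 1) = \<theta>' (q - 1) \<Longrightarrow> Wq n \<theta> qs = Wq n \<theta>' qs"
  by (induction qs) (auto simp: Wq_def)

lemma SC_indep: "\<forall>i < n + k. \<theta> i = \<theta>' i \<Longrightarrow> 1 \<le> n \<Longrightarrow> SC_partial n nc \<theta> k = SC_partial n nc \<theta>' k"
proof (induction k)
  case 0
  have e: "\<And>\<theta>. SC_partial n nc \<theta> 0 = Wq n \<theta> [1..<n+1]"
    by (simp add: Vl_def V1_def Wq_def)
  show ?case unfolding e by (rule Wq_indep) (use 0 in auto)
next
  case (Suc k)
  then show ?case by (simp add: Vl_def)
qed

lemma SC_upd: "n + k \<le> j \<Longrightarrow> 1 \<le> n \<Longrightarrow> SC_partial n nc (\<theta>(j := y)) k = SC_partial n nc \<theta> k"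
  by (rule SC_indep) auto


lemma cpi_lt: "mt < n \<Longrightarrow> j < 2^n \<Longrightarrow> cpi mc mt j < 2^n"
  by (simp add: cpi_def flip_bit_lt)

lemma cpi_flip_comm:
  assumes "mc \<noteq> mt"
  shows "cpi mc mt \<circ> flip_bit mt = flip_bit mt \<circ> (cpi mc mt :: nat \<Rightarrow> nat)"
proof
  fix j :: nat
  have "bit (flip_bit mt j) mc = bit j mc" using assms by (simp add: bit_flip_bit_iff)
  then show "(cpi mc mt \<circ> flip_bit mt) j = (flip_bit mt \<circ> cpi mc mt) j"
    by (simp add: cpi_def)
qed

lemma pm_cpi_X_comm:
  assumes "mc \<noteq> mt" "mt < n"
  shows "pm n (cpi mc mt) * oq n mt sigma1 = oq n mt sigma1 * pm n (cpi mc mt)"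
proof -
  have "pm n (cpi mc mt) * pm n (flip_bit mt) = pm n (cpi mc mt \<circ> flip_bit mt)"
    by (rule pm_mult_pm) (use assms in \<open>simp add: flip_bit_lt\<close>)
  also have "\<dots> = pm n (flip_bit mt \<circ> cpi mc mt)" using cpi_flip_comm[OF assms(1)] by simp
  also have "\<dots> = pm n (flip_bit mt) * pm n (cpi mc mt)"
    by (rule pm_mult_pm[symmetric]) (use assms in \<open>simp add: cpi_lt\<close>)
  finally show ?thesis by (simp add: oq_sigma1)
qed

lemma pm_cpi_oq_comm:
  assumes "mc \<noteq> m" "mt \<noteq> m" "mc \<noteq> mt" "mt < n"
  shows "pm n (cpi mc mt) * oq n m U = oq n m U * pm n (cpi mc mt)"
proof -
  have "oq n m U * pm n (cpi mc mt) = pm n (cpi mc mt) * oq n m U"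
  proof (rule pm_oq_comm)
    show "invol n (cpi mc mt)" by (rule cpi_invol) (use assms in auto)
  next
    fix j :: nat
    show "bit (cpi mc mt j) m = bit j m" using assms by (simp add: cpi_def bit_flip_bit_iff)
    have b: "bit (unset_bit m j) mc = bit j mc" using assms by (simp add: bit_unset_bit_iff)
    have f: "unset_bit m (flip_bit mt j) = flip_bit mt (unset_bit m j)"
      by (rule bit_eqI) (use assms in \<open>auto simp: bit_unset_bit_iff bit_flip_bit_iff\<close>)
    show "unset_bit m (cpi mc mt j) = cpi mc mt (unset_bit m j)"
      using b f by (simp add: cpi_def)
  qed
  then show ?thesis by simp
qed

lemma pm_cpi_unitary: "mc \<noteq> mt \<Longrightarrow> mt < n \<Longrightarrow> adj (pm n (cpi mc mt)) * pm n (cpi mc mt) = 1\<^sub>m (2^n)"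
  by (rule pm_unitary[OF cpi_invol])

lemma bm_Q:
  assumes F: "good n M F" and P: "P \<in> carrier_mat (2^n) (2^n)" and R: "\<rho> \<in> carrier_mat (2^n) (2^n)"
  shows "bmf M (\<lambda>\<theta>. Qf \<rho> P (F \<theta>))"
  unfolding Qf_def
  by (rule good_trace[of n], intro good_mult good_const good_adj F P R)

lemma int_const_prob: "prob_space M \<Longrightarrow> integral\<^sup>L M (\<lambda>x. c::real) = c"
  by (simp add: prob_space.prob_space)

theorem lemma11:
  fixes n nc :: nat and \<rho> :: "complex mat"
  assumes "n \<ge> 2" and "1 \<le> nc" and "nc \<le> n - 1"
    and "density_matrix n \<rho>"
  shows "(\<integral>\<theta>. (f_SC n nc \<rho> \<theta> - 1/2)\<^sup>2 \<partial>param_measure n)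
         \<ge> ((Re (mtrace (on_qubit n 1 sigma1 * \<rho>)))\<^sup>2 + (Re (mtrace (on_qubit n 1 sigma3 * \<rho>)))\<^sup>2)
           / 2 ^ (3 + nc)"
proof -
  note n2 = assms(1) and nc1 = assms(2) and ncn = assms(3)
  define I where "I = {..<2*n-1}"
  define M where "M = Pi\<^sub>M I (\<lambda>_. U2)"
  have PM: "param_measure n = M" by (simp add: param_measure_def M_def I_def)
  have finI: "finite I" by (simp add: I_def)
  have R: "\<rho> \<in> carrier_mat (2^n) (2^n)" using assms(4) by (simp add: density_matrix_def)
  define Px where "Px = oq n (n-1) sigma1"
  define Pz where "Pz = oq n (n-1) sigma3"
  have cPx: "Px \<in> carrier_mat (2^n) (2^n)" and cPz: "Pz \<in> carrier_mat (2^n) (2^n)"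
    by (auto simp: Px_def Pz_def)
  define S where "S = (\<lambda>k \<theta>. SC_partial n nc \<theta> k)"
  define hx where "hx = (\<lambda>k \<theta>. Qf \<rho> Px (S k \<theta>))"
  define hz where "hz = (\<lambda>k \<theta>. Qf \<rho> Pz (S k \<theta>))"
  define x where "x = Re (mtrace (Px * \<rho>))"
  define z where "z = Re (mtrace (Pz * \<rho>))"
  have cS: "\<And>k \<theta>. S k \<theta> \<in> carrier_mat (2^n) (2^n)" by (simp add: S_def SC_carrier)
  have gS: "\<And>k. k \<le> n - 1 \<Longrightarrow> good n M (S k)"
    unfolding S_def M_def I_def using good_SC[OF n2] by simp
  have bhx: "\<And>k. k \<le> n - 1 \<Longrightarrow> bmf M (hx k)"
    unfolding hx_def by (rule bm_Q[OF gS cPx R])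
  have bhz: "\<And>k. k \<le> n - 1 \<Longrightarrow> bmf M (hz k)"
    unfolding hz_def by (rule bm_Q[OF gS cPz R])
  interpret P: prob_space M unfolding M_def by (rule PiU_prob)
  have base: "\<And>\<theta>. hx 0 \<theta> = cos (2 * \<theta> 0) * x + sin (2 * \<theta> 0) * z"
  proof -
    fix \<theta> :: "nat \<Rightarrow> real"
    define W where "W = Wq n \<theta> [2..<n+1]"
    have cW: "W \<in> carrier_mat (2^n) (2^n)" by (simp add: W_def Wq_carrier)
    have Wp: "adj W * W = 1\<^sub>m (2^n)" "\<And>P. W * oq n (n - 1) P = oq n (n - 1) P * W"
      using Wq_props[of "[2..<n+1]" n \<theta>] by (auto simp: W_def)
    have one: "\<And>P. P \<in> carrier_mat (2^n) (2^n) \<Longrightarrow> Qf \<rho> P (1\<^sub>m (2^n)) = Re (mtrace (P * \<rho>))"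
      using R by (simp add: Qf_def adj_one)
    have WQ: "\<And>U. Qf \<rho> (oq n (n-1) U) W = Re (mtrace (oq n (n-1) U * \<rho>))"
    proof -
      fix U
      have "Qf \<rho> (oq n (n-1) U) W = Qf \<rho> (oq n (n-1) U) (W * 1\<^sub>m (2^n))" using cW by simp
      also have "\<dots> = Qf \<rho> (oq n (n-1) U) (1\<^sub>m (2^n))"
        by (rule Q_comm[OF cW oq_carrier one_carrier_mat R Wp(1) Wp(2)])
      finally show "Qf \<rho> (oq n (n-1) U) W = Re (mtrace (oq n (n-1) U * \<rho>))" by (simp add: one)
    qed
    have "S 0 \<theta> = oq n (n-1) (rotY (\<theta> 0)) * W"
      using n2 by (simp add: S_def W_def Vl_def V1_eq)
    then have "hx 0 \<theta> = cos (2 * \<theta> 0) * Qf \<rho> Px W + sin (2 * \<theta> 0) * Qf \<rho> Pz W"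
      unfolding hx_def Px_def Pz_def using Q_rot(2)[of "n-1" n W \<rho> "\<theta> 0"] cW R n2 by simp
    then show "hx 0 \<theta> = cos (2 * \<theta> 0) * x + sin (2 * \<theta> 0) * z"
      using WQ[of sigma1] WQ[of sigma3] by (simp add: Px_def Pz_def x_def z_def)
  qed
  have int_base: "integral\<^sup>L M (\<lambda>\<theta>. (hx 0 \<theta>)^2) = (x^2 + z^2) / 2"
  proof -
    have "integral\<^sup>L M (\<lambda>\<theta>. (hx 0 \<theta>)^2) = integral\<^sup>L M (\<lambda>\<theta>. x^2) / 2 + integral\<^sup>L M (\<lambda>\<theta>. z^2) / 2"
      unfolding M_def
      by (rule sq_int[OF finI _ bmf_const bmf_const _ _ base]) (use n2 in \<open>auto simp: I_def\<close>)
    also have "\<dots> = (x^2 + z^2) / 2" by (simp add: P.prob_space)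
    finally show ?thesis .
  qed
  have mid: "\<And>k \<theta>. 1 \<le> k \<Longrightarrow> k + 1 \<le> n - nc \<Longrightarrow> hx k \<theta> = hx (k-1) \<theta>"
  proof -
    fix k :: nat and \<theta> :: "nat \<Rightarrow> real"
    assume k1: "1 \<le> k" and k2: "k + 1 \<le> n - nc"
    have kn: "k < n - 1" "k - 1 < k" using k1 k2 nc1 by auto
    have e: "S k \<theta> = oq n k (rotY (\<theta> (n + k - 1))) * (pm n (cpi (k - 1) k) * S (k-1) \<theta>)"
      unfolding S_def using SC_step[OF k1] Vl_mid[OF k1 k2] CX_mid[OF k1 k2] by simp
    have c1: "oq n k (rotY (\<theta> (n + k - 1))) * Px = Px * oq n k (rotY (\<theta> (n + k - 1)))"
      unfolding Px_def by (rule oq_comm) (use kn in auto)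
    have c2: "pm n (cpi (k - 1) k) * Px = Px * pm n (cpi (k - 1) k)"
      unfolding Px_def by (rule pm_cpi_oq_comm) (use kn in auto)
    have "hx k \<theta> = Qf \<rho> Px (pm n (cpi (k - 1) k) * S (k-1) \<theta>)"
      unfolding hx_def e
      by (rule Q_comm[OF oq_carrier cPx mult_carrier_mat[OF pm_carrier cS] R oq_rot_unitary c1]) (use kn in auto)
    also have "\<dots> = hx (k-1) \<theta>"
      unfolding hx_def
      by (rule Q_comm[OF pm_carrier cPx cS R pm_cpi_unitary c2]) (use kn in auto)
    finally show "hx k \<theta> = hx (k-1) \<theta>" .
  qed
  have midall: "\<And>k \<theta>. k \<le> n - nc - 1 \<Longrightarrow> hx k \<theta> = hx 0 \<theta>"
  proof -
    fix k :: nat and \<theta>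
    show "k \<le> n - nc - 1 \<Longrightarrow> hx k \<theta> = hx 0 \<theta>"
    proof (induction k)
      case 0 then show ?case by simp
    next
      case (Suc k)
      then have "hx (Suc k) \<theta> = hx k \<theta>" using mid[of "Suc k" \<theta>] by simp
      then show ?case using Suc by simp
    qed
  qed
  have top: "\<And>k. n - nc \<le> k \<Longrightarrow> k \<le> n - 1 \<Longrightarrow>
      integral\<^sup>L M (\<lambda>\<theta>. (hx k \<theta>)^2) \<ge> integral\<^sup>L M (\<lambda>\<theta>. (hx (k-1) \<theta>)^2) / 2 \<and>
      integral\<^sup>L M (\<lambda>\<theta>. (hz k \<theta>)^2) \<ge> integral\<^sup>L M (\<lambda>\<theta>. (hx (k-1) \<theta>)^2) / 2"
  proof -
    fix k :: nat
    assume k1: "n - nc \<le> k" and k2: "k \<le> n - 1"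
    have k0: "1 \<le> k" using k1 ncn n2 by auto
    have kn: "k - 1 \<noteq> n - 1" "n - 1 < n" "k - 1 < n" using k0 k2 n2 by auto
    define j where "j = n + k - 1"
    have jI: "j \<in> I" using k2 n2 by (auto simp: I_def j_def)
    define C where "C = pm n (cpi (k - 1) (n - 1))"
    have cC: "C \<in> carrier_mat (2^n) (2^n)" by (simp add: C_def)
    have uC: "adj C * C = 1\<^sub>m (2^n)" unfolding C_def by (rule pm_cpi_unitary) (use kn in auto)
    have cX: "C * Px = Px * C" unfolding C_def Px_def by (rule pm_cpi_X_comm) (use kn in auto)
    define A where "A = (\<lambda>\<theta>. Qf \<rho> Pz (C * S (k-1) \<theta>))"
    have e: "\<And>\<theta>. S k \<theta> = oq n (n-1) (rotY (\<theta> j)) * (C * S (k-1) \<theta>)"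
      unfolding S_def C_def j_def using SC_step[OF k0] Vl_top[OF k0 k1] CX_top[OF k0 k2 k1] by simp
    have hxc: "\<And>\<theta>. Qf \<rho> Px (C * S (k-1) \<theta>) = hx (k-1) \<theta>"
      unfolding hx_def by (rule Q_comm[OF cC cPx cS R uC cX])
    have ex: "\<And>\<theta>. hx k \<theta> = cos (2 * \<theta> j) * hx (k-1) \<theta> + sin (2 * \<theta> j) * A \<theta>"
    proof -
      fix \<theta> :: "nat \<Rightarrow> real"
      have "hx k \<theta> = cos (2 * \<theta> j) * Qf \<rho> Px (C * S (k-1) \<theta>) + sin (2 * \<theta> j) * Qf \<rho> Pz (C * S (k-1) \<theta>)"
        unfolding hx_def e Px_def Pz_def
        by (rule Q_rot(2)[OF kn(2) mult_carrier_mat[OF cC cS] R])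
      then show "hx k \<theta> = cos (2 * \<theta> j) * hx (k-1) \<theta> + sin (2 * \<theta> j) * A \<theta>"
        using hxc[of \<theta>] by (simp add: A_def)
    qed
    have ez: "\<And>\<theta>. hz k \<theta> = cos (2 * \<theta> j) * A \<theta> + sin (2 * \<theta> j) * (- hx (k-1) \<theta>)"
    proof -
      fix \<theta> :: "nat \<Rightarrow> real"
      have "hz k \<theta> = cos (2 * \<theta> j) * Qf \<rho> Pz (C * S (k-1) \<theta>) + sin (2 * \<theta> j) * (- Qf \<rho> Px (C * S (k-1) \<theta>))"
        unfolding hz_def e Px_def Pz_def
        by (rule Q_rot(1)[OF kn(2) mult_carrier_mat[OF cC cS] R])
      then show "hz k \<theta> = cos (2 * \<theta> j) * A \<theta> + sin (2 * \<theta> j) * (- hx (k-1) \<theta>)"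
        using hxc[of \<theta>] by (simp add: A_def)
    qed
    have bA: "bmf M A" unfolding A_def
      by (rule bm_Q[OF good_mult[OF good_const[OF cC] gS] cPz R]) (use k2 in auto)
    have bX: "bmf M (hx (k-1))" by (rule bhx) (use k2 in auto)
    have bmX: "bmf M (\<lambda>\<theta>. - hx (k-1) \<theta>)" using bmf_scale[OF bX, of "-1"] by simp
    have upd: "\<And>\<theta> y. S (k-1) (\<theta>(j := y)) = S (k-1) \<theta>"
      unfolding S_def j_def by (rule SC_upd) (use k0 n2 in auto)
    have iA: "\<And>\<theta> y. A (\<theta>(j := y)) = A \<theta>" unfolding A_def upd ..
    have iX: "\<And>\<theta> y. hx (k-1) (\<theta>(j := y)) = hx (k-1) \<theta>" unfolding hx_def upd ..
    have iX': "\<And>\<theta> y. - hx (k-1) (\<theta>(j := y)) = - hx (k-1) \<theta>" unfolding iX ..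
    have 1: "integral\<^sup>L M (\<lambda>\<theta>. (hx k \<theta>)^2) \<ge> integral\<^sup>L M (\<lambda>\<theta>. (hx (k-1) \<theta>)^2) / 2"
      unfolding M_def by (rule sq_int_geA(1)[OF finI jI bX[unfolded M_def] bA[unfolded M_def] iX iA ex])
    have 2: "integral\<^sup>L M (\<lambda>\<theta>. (hz k \<theta>)^2) \<ge> integral\<^sup>L M (\<lambda>\<theta>. (- hx (k-1) \<theta>)^2) / 2"
      unfolding M_def by (rule sq_int_geA(2)[OF finI jI bA[unfolded M_def] bmX[unfolded M_def] iA iX' ez])
    show "integral\<^sup>L M (\<lambda>\<theta>. (hx k \<theta>)^2) \<ge> integral\<^sup>L M (\<lambda>\<theta>. (hx (k-1) \<theta>)^2) / 2 \<and>
      integral\<^sup>L M (\<lambda>\<theta>. (hz k \<theta>)^2) \<ge> integral\<^sup>L M (\<lambda>\<theta>. (hx (k-1) \<theta>)^2) / 2"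
      using 1 2 by simp
  qed
  have chain: "\<And>d. d \<le> nc - 1 \<Longrightarrow> integral\<^sup>L M (\<lambda>\<theta>. (hx (n - nc - 1 + d) \<theta>)^2) \<ge> (x^2 + z^2) / 2 / 2^d"
  proof -
    fix d :: nat
    show "d \<le> nc - 1 \<Longrightarrow> integral\<^sup>L M (\<lambda>\<theta>. (hx (n - nc - 1 + d) \<theta>)^2) \<ge> (x^2 + z^2) / 2 / 2^d"
    proof (induction d)
      case 0
      have "integral\<^sup>L M (\<lambda>\<theta>. (hx (n - nc - 1) \<theta>)^2) = integral\<^sup>L M (\<lambda>\<theta>. (hx 0 \<theta>)^2)"
        using midall[of "n - nc - 1"] by simp
      then show ?case using int_base by simp
    next
      case (Suc d)
      have k: "n - nc \<le> n - nc - 1 + Suc d" "n - nc - 1 + Suc d \<le> n - 1" using Suc.prems nc1 ncn n2 by auto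
      have km: "n - nc - 1 + Suc d - 1 = n - nc - 1 + d" using nc1 ncn by auto
      have B: "integral\<^sup>L M (\<lambda>\<theta>. (hx (n - nc - 1 + Suc d) \<theta>)^2) \<ge> integral\<^sup>L M (\<lambda>\<theta>. (hx (n - nc - 1 + d) \<theta>)^2) / 2"
        using top[OF k] km by simp
      have A: "integral\<^sup>L M (\<lambda>\<theta>. (hx (n - nc - 1 + d) \<theta>)^2) \<ge> (x^2 + z^2) / 2 / 2^d"
        using Suc by simp
      have "(x^2 + z^2) / 2 / 2^(Suc d) = ((x^2 + z^2) / 2 / 2^d) / 2" by simp
      also have "\<dots> \<le> integral\<^sup>L M (\<lambda>\<theta>. (hx (n - nc - 1 + d) \<theta>)^2) / 2"
        using A by (rule divide_right_mono) simp
      also have "\<dots> \<le> integral\<^sup>L M (\<lambda>\<theta>. (hx (n - nc - 1 + Suc d) \<theta>)^2)" using B .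
      finally show ?case .
    qed
  qed
  have last: "integral\<^sup>L M (\<lambda>\<theta>. (hz (n-1) \<theta>)^2) \<ge> (x^2 + z^2) / 2 / 2^nc"
  proof -
    have k: "n - nc \<le> n - 1" "n - 1 \<le> n - 1" using nc1 by auto
    have e: "n - 1 - 1 = n - nc - 1 + (nc - 1)" using nc1 ncn n2 by auto
    have B: "integral\<^sup>L M (\<lambda>\<theta>. (hz (n-1) \<theta>)^2) \<ge> integral\<^sup>L M (\<lambda>\<theta>. (hx (n - nc - 1 + (nc - 1)) \<theta>)^2) / 2"
      using top[OF k] e by simp
    have A: "integral\<^sup>L M (\<lambda>\<theta>. (hx (n - nc - 1 + (nc - 1)) \<theta>)^2) \<ge> (x^2 + z^2) / 2 / 2^(nc - 1)"
      by (rule chain) simp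
    have p: "(2::real)^nc = 2 * 2^(nc - 1)" using nc1 by (cases nc) auto
    have "(x^2 + z^2) / 2 / 2^nc = ((x^2 + z^2) / 2 / 2^(nc - 1)) / 2" unfolding p by simp
    also have "\<dots> \<le> integral\<^sup>L M (\<lambda>\<theta>. (hx (n - nc - 1 + (nc - 1)) \<theta>)^2) / 2"
      using A by (rule divide_right_mono) simp
    also have "\<dots> \<le> integral\<^sup>L M (\<lambda>\<theta>. (hz (n-1) \<theta>)^2)" using B .
    finally show ?thesis .
  qed
  have fe: "\<And>\<theta>. (f_SC n nc \<rho> \<theta> - 1/2)^2 = (hz (n-1) \<theta>)^2 / 4"
    by (simp add: f_SC_def hz_def Qf_def S_def V_SC_def on_qubit_oq Pz_def power2_eq_square)
  have "(\<integral>\<theta>. (f_SC n nc \<rho> \<theta> - 1/2)\<^sup>2 \<partial>param_measure n) = integral\<^sup>L M (\<lambda>\<theta>. (hz (n-1) \<theta>)^2) / 4"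
    unfolding PM fe by simp
  moreover have "x = Re (mtrace (on_qubit n 1 sigma1 * \<rho>))" "z = Re (mtrace (on_qubit n 1 sigma3 * \<rho>))"
    by (simp_all add: x_def z_def Px_def Pz_def on_qubit_oq)
  moreover have "(2::real) ^ (3 + nc) = 8 * 2^nc" by (simp add: power_add)
  ultimately show ?thesis using last by (simp add: field_simps)
qed

end
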